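(* Let $P_1$ and $P_2$ be finite semipure posets of the same length, and assume $P_2$ has a minimum element $\hat 0_2$. Let $\lambda_1:\mathrm{Cov}(\hat P_1)\to L_1$ be an EL-labeling of $\hat P_1$, whose adjoined minimum and maximum are denoted $\hat 0_1,\hat 1_1$, and let $\lambda_2:\mathrm{Cov}(P_2)\to L_2$ be a semi-EL-labeling of $P_2$. Let $L_2\uplus\{\hat 0_{L_2}\}$ be the poset $L_2$ with a new minimum element $\hat 0_{L_2}$ adjoined, and give $L_1\times(L_2\uplus\{\hat 0_{L_2}\})$ the componentwise (product) order. Denote the minimum of $\widehat{P_1*P_2}$ by $(\hat 0_1,\hat 0_2)$ and its maximum by $\hat 1$. Define $\lambda:\mathrm{Cov}(\widehat{P_1*P_2})\to L_1\times(L_2\uplus\{\hat 0_{L_2}\})$ as follows: for a cover $(x,k)\lessdot(y,l)$ with $(y,l)\neq\hat 1$ (where $(x,k)$ may be the minimum $(\hat 0_1,\hat 0_2)$), $$\lambda((x,k),(y,l))=\begin{cases}(\lambda_1(x,y),\lambda_2(k,l)) & \text{if } k<_{P_2} l,\\ (\lambda_1(x,y),\hat 0_{L_2}) & \text{if } k=l,\end{cases}$$ and for a cover $(x,k)\lessdot\hat 1$, $\lambda((x,k),\hat 1)=(\lambda_1(x,\hat 1_1),\hat 0_{L_2})$. Then $\lambda$ is an EL-labeling of $\widehat{P_1*P_2}$.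
   Context: All posets are finite. A poset $P$ is semipure if for every $x\in P$ all maximal chains of $P_{\le x}=\{y\in P:y\le x\}$ have the same length; this length is the rank $r_P(x)$. For semipure $P,Q$, the Rees product $P*Q$ is the set $\{(p,q)\in P\times Q: r_P(p)\ge r_Q(q)\}$ ordered by $(p_1,q_1)\le(p_2,q_2)$ iff $p_1\le_P p_2$, $q_1\le_Q q_2$ and $r_P(p_2)-r_P(p_1)\ge r_Q(q_2)-r_Q(q_1)$; equivalently $(p_2,q_2)$ covers $(p_1,q_1)$ iff $p_2$ covers $p_1$ in $P$ and either $q_2=q_1$ or $q_2$ covers $q_1$ in $Q$. For any poset $P$, $\hat P$ denotes $P$ with a new minimum $\hat 0$ and a new maximum $\hat 1$ adjoined (even if $P$ already has such elements). $\mathrm{Cov}(P)$ is the set of pairs $(x,y)$ with $y$ covering $x$. For a poset $L$, sequences over $L$ are compared lexicographically: $(a_1,\dots,a_m)\prec(b_1,\dots,b_m)$ if at the first index $i$ with $a_i\ne b_i$ we have $a_i<b_i$. An edge labeling of a bounded poset $P$ is a map $\lambda:\mathrm{Cov}(P)\to L$; the label sequence of a saturated chain $x_1<\dots<x_m$ is $(\lambda(x_1,x_2),\dots,\lambda(x_{m-1},x_m))$, and the chain is weakly increasing if $\lambda(x_i,x_{i+1})\le\lambda(x_{i+1},x_{i+2})$ for all $i$. $\lambda$ is an EL-labeling if for every $x<y$ in $P$ there is a unique weakly increasing maximal chain $C$ of $[x,y]$ and its label sequence lexicographically precedes ($\prec$) the label sequence of every other maximal chain of $[x,y]$. If $P$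 has a minimum $\hat 0$, an edge labeling of $P$ is a semi-EL-labeling if its restriction to $[\hat 0,m]$ is an EL-labeling for every maximal element $m$ of $P$. *)

theory Defs
  imports Main "HOL-Library.Product_Order" "HOL-Library.Option_ord"
begin

definition poset_on :: "'a set \<Rightarrow> ('a \<Rightarrow> 'a \<Rightarrow> bool) \<Rightarrow> bool" where
  "poset_on S le \<longleftrightarrow>
     (\<forall>x\<in>S. le x x) \<and>
     (\<forall>x\<in>S. \<forall>y\<in>S. le x y \<and> le y x \<longrightarrow> x = y) \<and>
     (\<forall>x\<in>S. \<forall>y\<in>S. \<forall>z\<in>S. le x y \<and> le y z \<longrightarrow> le x z)"

definition finite_poset :: "'a set \<Rightarrow> ('a \<Rightarrow> 'a \<Rightarrow> bool) \<Rightarrow> bool" where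
  "finite_poset S le \<longleftrightarrow> finite S \<and> poset_on S le"

definition strict :: "('a \<Rightarrow> 'a \<Rightarrow> bool) \<Rightarrow> 'a \<Rightarrow> 'a \<Rightarrow> bool" where
  "strict le x y \<longleftrightarrow> le x y \<and> x \<noteq> y"

definition covers :: "'a set \<Rightarrow> ('a \<Rightarrow> 'a \<Rightarrow> bool) \<Rightarrow> 'a \<Rightarrow> 'a \<Rightarrow> bool" where
  "covers S le x y \<longleftrightarrow> x \<in> S \<and> y \<in> S \<and> strict le x y \<and>
     \<not> (\<exists>z\<in>S. strict le x z \<and> strict le z y)"

definition down_set :: "'a set \<Rightarrow> ('a \<Rightarrow> 'a \<Rightarrow> bool) \<Rightarrow> 'a \<Rightarrow> 'a set" where
  "down_set S le x = {y \<in> S. le y x}"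

definition interval :: "'a set \<Rightarrow> ('a \<Rightarrow> 'a \<Rightarrow> bool) \<Rightarrow> 'a \<Rightarrow> 'a \<Rightarrow> 'a set" where
  "interval S le x y = {z \<in> S. le x z \<and> le z y}"

definition is_chain :: "'a set \<Rightarrow> ('a \<Rightarrow> 'a \<Rightarrow> bool) \<Rightarrow> 'a set \<Rightarrow> bool" where
  "is_chain S le C \<longleftrightarrow> C \<subseteq> S \<and> (\<forall>a\<in>C. \<forall>b\<in>C. le a b \<or> le b a)"

definition is_maxchain :: "'a set \<Rightarrow> ('a \<Rightarrow> 'a \<Rightarrow> bool) \<Rightarrow> 'a set \<Rightarrow> bool" where
  "is_maxchain S le C \<longleftrightarrow> is_chain S le C \<and> \<not> (\<exists>D. is_chain S le D \<and> C \<subset> D)"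

definition semipure :: "'a set \<Rightarrow> ('a \<Rightarrow> 'a \<Rightarrow> bool) \<Rightarrow> bool" where
  "semipure S le \<longleftrightarrow>
     (\<forall>x\<in>S. \<forall>C D. is_maxchain (down_set S le x) le C \<and> is_maxchain (down_set S le x) le D
        \<longrightarrow> card C = card D)"

definition rank :: "'a set \<Rightarrow> ('a \<Rightarrow> 'a \<Rightarrow> bool) \<Rightarrow> 'a \<Rightarrow> nat" where
  "rank S le x = (THE n. \<exists>C. is_maxchain (down_set S le x) le C \<and> card C = Suc n)"

(* length of a poset: maximal length of a chain (-1 for the empty poset) *)
definition poset_length :: "'a set \<Rightarrow> ('a \<Rightarrow> 'a \<Rightarrow> bool) \<Rightarrow> int" where
  "poset_length S le = int (Max {card C | C. is_chain S le C}) - 1"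

definition rees_carrier ::
  "'a set \<Rightarrow> ('a \<Rightarrow> 'a \<Rightarrow> bool) \<Rightarrow> 'b set \<Rightarrow> ('b \<Rightarrow> 'b \<Rightarrow> bool) \<Rightarrow> ('a \<times> 'b) set" where
  "rees_carrier S1 le1 S2 le2 = {(p, q). p \<in> S1 \<and> q \<in> S2 \<and> rank S1 le1 p \<ge> rank S2 le2 q}"

definition rees_le ::
  "'a set \<Rightarrow> ('a \<Rightarrow> 'a \<Rightarrow> bool) \<Rightarrow> 'b set \<Rightarrow> ('b \<Rightarrow> 'b \<Rightarrow> bool) \<Rightarrow> 'a \<times> 'b \<Rightarrow> 'a \<times> 'b \<Rightarrow> bool" where
  "rees_le S1 le1 S2 le2 u v \<longleftrightarrow>
     le1 (fst u) (fst v) \<and> le2 (snd u) (snd v) \<and>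
     int (rank S1 le1 (fst v)) - int (rank S1 le1 (fst u))
       \<ge> int (rank S2 le2 (snd v)) - int (rank S2 le2 (snd u))"

datatype 'a hat = HBot | Mid 'a | HTop

definition hat_carrier :: "'a set \<Rightarrow> 'a hat set" where
  "hat_carrier S = {HBot, HTop} \<union> Mid ` S"

fun hat_le :: "('a \<Rightarrow> 'a \<Rightarrow> bool) \<Rightarrow> 'a hat \<Rightarrow> 'a hat \<Rightarrow> bool" where
  "hat_le le HBot _ = True"
| "hat_le le (Mid x) (Mid y) = le x y"
| "hat_le le _ HTop = True"
| "hat_le le _ _ = False"

definition maxchain_list :: "'a set \<Rightarrow> ('a \<Rightarrow> 'a \<Rightarrow> bool) \<Rightarrow> 'a \<Rightarrow> 'a \<Rightarrow> 'a list \<Rightarrow> bool" where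
  "maxchain_list S le x y xs \<longleftrightarrow>
     sorted_wrt (strict le) xs \<and> is_maxchain (interval S le x y) le (set xs)"

definition label_seq :: "('a \<Rightarrow> 'a \<Rightarrow> 'l) \<Rightarrow> 'a list \<Rightarrow> 'l list" where
  "label_seq lam xs = map (\<lambda>(a, b). lam a b) (zip xs (tl xs))"

definition weakly_increasing :: "('a \<Rightarrow> 'a \<Rightarrow> 'l::order) \<Rightarrow> 'a list \<Rightarrow> bool" where
  "weakly_increasing lam xs \<longleftrightarrow>
     (\<forall>i. Suc (Suc i) < length xs \<longrightarrow>
        lam (xs ! i) (xs ! Suc i) \<le> lam (xs ! Suc i) (xs ! Suc (Suc i)))"

definition lex_prec :: "'l::order list \<Rightarrow> 'l list \<Rightarrow> bool" where
  "lex_prec as bs \<longleftrightarrow>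
     (\<exists>i. i < length as \<and> i < length bs \<and> take i as = take i bs \<and> as ! i < bs ! i)"

definition EL_labeling :: "'a set \<Rightarrow> ('a \<Rightarrow> 'a \<Rightarrow> bool) \<Rightarrow> ('a \<Rightarrow> 'a \<Rightarrow> 'l::order) \<Rightarrow> bool" where
  "EL_labeling S le lam \<longleftrightarrow>
     (\<forall>x\<in>S. \<forall>y\<in>S. strict le x y \<longrightarrow>
        (\<exists>!xs. maxchain_list S le x y xs \<and> weakly_increasing lam xs) \<and>
        (\<forall>xs ys. maxchain_list S le x y xs \<and> weakly_increasing lam xs \<and>
                 maxchain_list S le x y ys \<and> ys \<noteq> xs
                 \<longrightarrow> lex_prec (label_seq lam xs) (label_seq lam ys)))"

definition is_minimum :: "'a set \<Rightarrow> ('a \<Rightarrow> 'a \<Rightarrow> bool) \<Rightarrow> 'a \<Rightarrow> bool" where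
  "is_minimum S le z \<longleftrightarrow> z \<in> S \<and> (\<forall>y\<in>S. le z y)"

definition is_maximal :: "'a set \<Rightarrow> ('a \<Rightarrow> 'a \<Rightarrow> bool) \<Rightarrow> 'a \<Rightarrow> bool" where
  "is_maximal S le m \<longleftrightarrow> m \<in> S \<and> \<not> (\<exists>y\<in>S. strict le m y)"

definition semi_EL_labeling ::
  "'a set \<Rightarrow> ('a \<Rightarrow> 'a \<Rightarrow> bool) \<Rightarrow> 'a \<Rightarrow> ('a \<Rightarrow> 'a \<Rightarrow> 'l::order) \<Rightarrow> bool" where
  "semi_EL_labeling S le z lam \<longleftrightarrow>
     (\<forall>m. is_maximal S le m \<longrightarrow> EL_labeling (interval S le z m) le lam)"

(* The labeling lambda of the hatted Rees product; labels in L1 x (L2 + new minimum None),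
   with the componentwise order.  z2 is the minimum of P2. *)
fun rees_label ::
  "('a hat \<Rightarrow> 'a hat \<Rightarrow> 'l1) \<Rightarrow> ('b \<Rightarrow> 'b \<Rightarrow> 'l2) \<Rightarrow> 'b \<Rightarrow>
   ('a \<times> 'b) hat \<Rightarrow> ('a \<times> 'b) hat \<Rightarrow> 'l1 \<times> 'l2 option" where
  "rees_label l1 l2 z HBot HTop = (l1 HBot HTop, None)"
| "rees_label l1 l2 z (Mid (x, k)) HTop = (l1 (Mid x) HTop, None)"
| "rees_label l1 l2 z HBot (Mid (y, l)) =
     (l1 HBot (Mid y), if z = l then None else Some (l2 z l))"
| "rees_label l1 l2 z (Mid (x, k)) (Mid (y, l)) =
     (l1 (Mid x) (Mid y), if k = l then None else Some (l2 k l))"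
| "rees_label l1 l2 z _ _ = undefined"

end

theory Submission
  imports Defs
begin


section \<open>Generic poset facts\<close>

lemma poset_reflD: "poset_on S le \<Longrightarrow> x \<in> S \<Longrightarrow> le x x"
  unfolding poset_on_def by blast
lemma poset_antisymD: "poset_on S le \<Longrightarrow> x \<in> S \<Longrightarrow> y \<in> S \<Longrightarrow> le x y \<Longrightarrow> le y x \<Longrightarrow> x = y"
  unfolding poset_on_def by blast
lemma poset_transD: "poset_on S le \<Longrightarrow> x \<in> S \<Longrightarrow> y \<in> S \<Longrightarrow> z \<in> S \<Longrightarrow> le x y \<Longrightarrow> le y z \<Longrightarrow> le x z"
  unfolding poset_on_def by blast

lemma strict_trans:
  assumes "poset_on S le" "x \<in> S" "y \<in> S" "z \<in> S" "strict le x y" "strict le y z"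
  shows "strict le x z"
  using assms unfolding strict_def
  by (metis poset_antisymD poset_transD)

definition cpath :: "'a set \<Rightarrow> ('a \<Rightarrow> 'a \<Rightarrow> bool) \<Rightarrow> 'a list \<Rightarrow> bool" where
  "cpath S le xs \<longleftrightarrow> xs \<noteq> [] \<and> set xs \<subseteq> S \<and>
     (\<forall>i. Suc i < length xs \<longrightarrow> covers S le (xs!i) (xs!Suc i))"

lemma cpath_nth_in: "cpath S le xs \<Longrightarrow> i < length xs \<Longrightarrow> xs!i \<in> S"
  unfolding cpath_def by (meson nth_mem subsetD)

lemma cpath_strict_nth:
  assumes P: "poset_on S le" and c: "cpath S le xs"
  shows "i < j \<Longrightarrow> j < length xs \<Longrightarrow> strict le (xs!i) (xs!j)"
proof (induction j)
  case 0 then show ?case by simp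
next
  case (Suc j)
  have cov: "covers S le (xs!j) (xs!Suc j)" using c Suc.prems unfolding cpath_def by auto
  have mem: "xs!i \<in> S" "xs!j \<in> S" "xs!Suc j \<in> S" using cpath_nth_in[OF c] Suc.prems by auto
  show ?case
  proof (cases "i = j")
    case True then show ?thesis using cov by (simp add: covers_def)
  next
    case False
    then have "strict le (xs!i) (xs!j)" using Suc by simp
    then show ?thesis using strict_trans[OF P mem] cov by (simp add: covers_def)
  qed
qed

lemma cpath_le_nth:
  assumes P: "poset_on S le" and c: "cpath S le xs"
  shows "i \<le> j \<Longrightarrow> j < length xs \<Longrightarrow> le (xs!i) (xs!j)"
proof -
  assume "i \<le> j" "j < length xs"
  moreover have "xs!i \<in> S" using cpath_nth_in[OF c] \<open>i \<le> j\<close> \<open>j < length xs\<close> by auto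
  ultimately show ?thesis using cpath_strict_nth[OF P c, of i j] poset_reflD[OF P]
    by (cases "i = j") (auto simp: strict_def)
qed

lemma cpath_sorted:
  assumes P: "poset_on S le" and c: "cpath S le xs"
  shows "sorted_wrt (strict le) xs"
  using cpath_strict_nth[OF P c] by (simp add: sorted_wrt_iff_nth_less)

lemma hd_conv_nth0: "xs \<noteq> [] \<Longrightarrow> hd xs = xs!0" by (simp add: hd_conv_nth)

lemma maxchain_list_iff:
  assumes P: "poset_on S le" and xS: "x \<in> S" and yS: "y \<in> S" and xy: "strict le x y"
  shows "maxchain_list S le x y xs \<longleftrightarrow> cpath S le xs \<and> hd xs = x \<and> last xs = y"
proof
  assume m: "maxchain_list S le x y xs"
  let ?I = "interval S le x y"
  have sw: "sorted_wrt (strict le) xs" and mc: "is_maxchain ?I le (set xs)"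
    using m unfolding maxchain_list_def by auto
  have sub: "set xs \<subseteq> ?I" and ch: "\<forall>a\<in>set xs. \<forall>b\<in>set xs. le a b \<or> le b a"
    using mc unfolding is_maxchain_def is_chain_def by auto
  have nosup: "\<And>D. is_chain ?I le D \<Longrightarrow> \<not> set xs \<subset> D"
    using mc unfolding is_maxchain_def by auto
  have sn: "\<And>i j. i < j \<Longrightarrow> j < length xs \<Longrightarrow> strict le (xs!i) (xs!j)"
    using sw by (simp add: sorted_wrt_iff_nth_less)
  have inS: "\<And>i. i < length xs \<Longrightarrow> xs!i \<in> S" using sub by (auto simp: interval_def set_conv_nth)
  have lowb: "\<And>i. i < length xs \<Longrightarrow> le x (xs!i)" using sub by (auto simp: interval_def set_conv_nth)
  have upb: "\<And>i. i < length xs \<Longrightarrow> le (xs!i) y" using sub by (auto simp: interval_def set_conv_nth)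
  have xI: "x \<in> ?I" "y \<in> ?I" using xS yS xy poset_reflD[OF P] by (auto simp: interval_def strict_def)
  have xin: "x \<in> set xs"
  proof (rule ccontr)
    assume "x \<notin> set xs"
    have "is_chain ?I le (insert x (set xs))"
      unfolding is_chain_def using sub ch xI
      by (auto simp: interval_def poset_reflD[OF P])
    moreover have "set xs \<subset> insert x (set xs)" using \<open>x \<notin> set xs\<close> by auto
    ultimately show False using nosup by blast
  qed
  have yin: "y \<in> set xs"
  proof (rule ccontr)
    assume "y \<notin> set xs"
    have "is_chain ?I le (insert y (set xs))"
      unfolding is_chain_def using sub ch xI
      by (auto simp: interval_def poset_reflD[OF P])
    moreover have "set xs \<subset> insert y (set xs)" using \<open>y \<notin> set xs\<close> by auto
    ultimately show False using nosup by blast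
  qed
  have ne: "xs \<noteq> []" using xin by auto
  have hdx: "hd xs = x"
  proof -
    obtain j where j: "j < length xs" "xs!j = x" using xin by (auto simp: in_set_conv_nth)
    show ?thesis
    proof (cases j)
      case 0 then show ?thesis using j ne by (simp add: hd_conv_nth)
    next
      case (Suc j')
      then have "strict le (xs!0) x" using sn[of 0 j] j by simp
      moreover have "le x (xs!0)" using lowb ne by simp
      ultimately show ?thesis using poset_antisymD[OF P] inS ne xS
        by (simp add: strict_def) (metis length_greater_0_conv)
    qed
  qed
  have lasty: "last xs = y"
  proof -
    obtain j where j: "j < length xs" "xs!j = y" using yin by (auto simp: in_set_conv_nth)
    show ?thesis
    proof (cases "j = length xs - 1")
      case True then show ?thesis using j ne by (simp add: last_conv_nth)
    next
      case False
      then have "strict le y (xs!(length xs - 1))" using sn[of j "length xs - 1"] j by simp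
      moreover have "le (xs!(length xs - 1)) y" using upb ne by simp
      moreover have "xs!(length xs - 1) \<in> S" using inS ne by simp
      ultimately show ?thesis using poset_antisymD[OF P, of y "xs!(length xs - 1)"] yS
        by (simp add: strict_def)
    qed
  qed
  have cov: "\<And>i. Suc i < length xs \<Longrightarrow> covers S le (xs!i) (xs!Suc i)"
  proof -
    fix i assume i: "Suc i < length xs"
    show "covers S le (xs!i) (xs!Suc i)"
      unfolding covers_def
    proof (intro conjI)
      show "xs!i \<in> S" "xs!Suc i \<in> S" using inS i by auto
      show "strict le (xs!i) (xs!Suc i)" using sn i by auto
      show "\<not> (\<exists>z\<in>S. strict le (xs!i) z \<and> strict le z (xs!Suc i))"
      proof
        assume "\<exists>z\<in>S. strict le (xs!i) z \<and> strict le z (xs!Suc i)"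
        then obtain z where z: "z \<in> S" "strict le (xs!i) z" "strict le z (xs!Suc i)" by blast
        have zI: "z \<in> ?I"
        proof -
          have "le x z" using poset_transD[OF P xS inS[of i] z(1) lowb[of i]] z i by (simp add: strict_def)
          moreover have "le z y" using poset_transD[OF P z(1) inS[of "Suc i"] yS _ upb[of "Suc i"]] z i
            by (simp add: strict_def)
          ultimately show ?thesis using z by (simp add: interval_def)
        qed
        have znot: "z \<notin> set xs"
        proof
          assume "z \<in> set xs"
          then obtain j where j: "j < length xs" "xs!j = z" by (auto simp: in_set_conv_nth)
          consider "j < i" | "j = i" | "j = Suc i" | "Suc i < j" by linarith
          then show False
          proof cases
            case 1 then have "strict le z (xs!i)" using sn j i by fastforce
            then show ?thesis using z poset_antisymD[OF P] inS i by (auto simp: strict_def)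
          next
            case 2 then show ?thesis using z j by (auto simp: strict_def)
          next
            case 3 then show ?thesis using z j by (auto simp: strict_def)
          next
            case 4 then have "strict le (xs!Suc i) z" using sn j i by fastforce
            then show ?thesis using z poset_antisymD[OF P] inS i by (auto simp: strict_def)
          qed
        qed
        have "is_chain ?I le (insert z (set xs))"
          unfolding is_chain_def
        proof (intro conjI ballI)
          show "insert z (set xs) \<subseteq> ?I" using zI sub by auto
          fix a b assume a: "a \<in> insert z (set xs)" and b: "b \<in> insert z (set xs)"
          have zc: "\<And>c. c \<in> set xs \<Longrightarrow> le c z \<or> le z c"
          proof -
            fix c assume "c \<in> set xs"
            then obtain j where j: "j < length xs" "xs!j = c" by (auto simp: in_set_conv_nth)
            show "le c z \<or> le z c"
            proof (cases "j \<le> i")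
              case True
              then have "le c (xs!i)" using sn j i inS poset_reflD[OF P]
                by (cases "j = i") (auto simp: strict_def)
              then show ?thesis using z j inS i poset_transD[OF P, of c "xs!i" z]
                by (auto simp: strict_def)
            next
              case False
              then have "le (xs!Suc i) c" using sn j i inS poset_reflD[OF P]
                by (cases "j = Suc i") (auto simp: strict_def)
              then show ?thesis using z j inS i poset_transD[OF P, of z "xs!Suc i" c]
                by (auto simp: strict_def)
            qed
          qed
          show "le a b \<or> le b a" using a b ch zc poset_reflD[OF P] z by auto
        qed
        moreover have "set xs \<subset> insert z (set xs)" using znot by auto
        ultimately show False using nosup by blast
      qed
    qed
  qed
  show "cpath S le xs \<and> hd xs = x \<and> last xs = y"
    using ne inS cov hdx lasty unfolding cpath_def by (auto simp: set_conv_nth)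
next
  assume a: "cpath S le xs \<and> hd xs = x \<and> last xs = y"
  then have c: "cpath S le xs" and hx: "hd xs = x" and ly: "last xs = y" by auto
  let ?I = "interval S le x y"
  have ne: "xs \<noteq> []" using c by (simp add: cpath_def)
  have x0: "xs!0 = x" using hx ne by (simp add: hd_conv_nth)
  have yl: "xs!(length xs - 1) = y" using ly ne by (simp add: last_conv_nth)
  have inS: "\<And>i. i < length xs \<Longrightarrow> xs!i \<in> S" using cpath_nth_in[OF c] by blast
  have lenu: "\<And>i j. i \<le> j \<Longrightarrow> j < length xs \<Longrightarrow> le (xs!i) (xs!j)" using cpath_le_nth[OF P c] by blast
  have sub: "set xs \<subseteq> ?I"
  proof
    fix a assume "a \<in> set xs"
    then obtain j where j: "j < length xs" "xs!j = a" by (auto simp: in_set_conv_nth)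
    show "a \<in> ?I" unfolding interval_def using inS[OF j(1)] lenu[of 0 j] lenu[of j "length xs - 1"] j x0 yl
      by auto
  qed
  have ch: "is_chain ?I le (set xs)"
    unfolding is_chain_def
  proof (intro conjI ballI sub)
    fix a b assume "a \<in> set xs" "b \<in> set xs"
    then obtain i j where "i < length xs" "xs!i = a" "j < length xs" "xs!j = b" by (auto simp: in_set_conv_nth)
    then show "le a b \<or> le b a" using lenu[of i j] lenu[of j i] by (cases "i \<le> j") auto
  qed
  have maxl: "\<not> (\<exists>D. is_chain ?I le D \<and> set xs \<subset> D)"
  proof
    assume "\<exists>D. is_chain ?I le D \<and> set xs \<subset> D"
    then obtain D w where D: "is_chain ?I le D" "set xs \<subseteq> D" "w \<in> D" "w \<notin> set xs" by blast
    have wI: "w \<in> ?I" using D unfolding is_chain_def by auto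
    have comp: "\<And>j. j < length xs \<Longrightarrow> le (xs!j) w \<or> le w (xs!j)"
      using D unfolding is_chain_def by (meson nth_mem subsetD)
    have wne: "\<And>j. j < length xs \<Longrightarrow> xs!j \<noteq> w" using D(4) by auto
    define J where "J = {j. j < length xs \<and> le (xs!j) w}"
    have finJ: "finite J" unfolding J_def by auto
    have J0: "0 \<in> J" unfolding J_def using wI x0 ne by (auto simp: interval_def)
    define j where "j = Max J"
    have jJ: "j \<in> J" unfolding j_def using finJ J0 Max_in by blast
    have jmax: "\<And>t. t \<in> J \<Longrightarrow> t \<le> j" unfolding j_def using finJ by simp
    have jl: "j < length xs" and ljw: "le (xs!j) w" using jJ unfolding J_def by auto
    have "Suc j < length xs"
    proof (rule ccontr)
      assume "\<not> Suc j < length xs"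
      then have "j = length xs - 1" using jl by simp
      then have "le y w" using ljw yl by simp
      moreover have "le w y" "w \<in> S" using wI by (auto simp: interval_def)
      ultimately have "w = y" using poset_antisymD[OF P] yS by blast
      then show False using wne[of "length xs - 1"] yl ne by simp
    qed
    then have "Suc j \<notin> J" using jmax by fastforce
    then have "le w (xs!Suc j)" using comp[OF \<open>Suc j < length xs\<close>] unfolding J_def
      using \<open>Suc j < length xs\<close> by auto
    moreover have "covers S le (xs!j) (xs!Suc j)" using c \<open>Suc j < length xs\<close> unfolding cpath_def by auto
    moreover have "w \<in> S" using wI by (simp add: interval_def)
    moreover have "strict le (xs!j) w" using ljw wne[of j] jl by (simp add: strict_def)
    moreover have "xs!Suc j \<noteq> w" using wne \<open>Suc j < length xs\<close> by blast
    ultimately show False unfolding covers_def strict_def by metis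
  qed
  show "maxchain_list S le x y xs"
    unfolding maxchain_list_def is_maxchain_def by (intro conjI cpath_sorted[OF P c] ch maxl)
qed



definition cp :: "'a set \<Rightarrow> ('a \<Rightarrow> 'a \<Rightarrow> bool) \<Rightarrow> 'a \<Rightarrow> 'a \<Rightarrow> 'a list \<Rightarrow> bool" where
  "cp S le x y xs \<longleftrightarrow> cpath S le xs \<and> hd xs = x \<and> last xs = y"

definition ELpair :: "'a set \<Rightarrow> ('a \<Rightarrow> 'a \<Rightarrow> bool) \<Rightarrow> ('a \<Rightarrow> 'a \<Rightarrow> 'l::order) \<Rightarrow> 'a \<Rightarrow> 'a \<Rightarrow> bool" where
  "ELpair S le lam x y \<longleftrightarrow>
     (\<exists>!xs. cp S le x y xs \<and> weakly_increasing lam xs) \<and>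
     (\<forall>xs ys. cp S le x y xs \<and> weakly_increasing lam xs \<and> cp S le x y ys \<and> ys \<noteq> xs
        \<longrightarrow> lex_prec (label_seq lam xs) (label_seq lam ys))"

lemma EL_D:
  assumes P: "poset_on S le" and E: "EL_labeling S le lam" and xS: "x \<in> S" and yS: "y \<in> S"
    and xy: "strict le x y"
  shows "ELpair S le lam x y"
proof -
  have B: "(\<exists>!xs. maxchain_list S le x y xs \<and> weakly_increasing lam xs) \<and>
        (\<forall>xs ys. maxchain_list S le x y xs \<and> weakly_increasing lam xs \<and>
                 maxchain_list S le x y ys \<and> ys \<noteq> xs
                 \<longrightarrow> lex_prec (label_seq lam xs) (label_seq lam ys))"
    using E xS yS xy unfolding EL_labeling_def by blast
  then show ?thesis unfolding ELpair_def cp_def by (simp add: maxchain_list_iff[OF P xS yS xy])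
qed

lemma EL_I:
  assumes P: "poset_on S le" and H: "\<And>x y. x \<in> S \<Longrightarrow> y \<in> S \<Longrightarrow> strict le x y \<Longrightarrow> ELpair S le lam x y"
  shows "EL_labeling S le lam"
  unfolding EL_labeling_def
proof (intro ballI impI)
  fix x y assume xS: "x \<in> S" and yS: "y \<in> S" and xy: "strict le x y"
  have "ELpair S le lam x y" using H xS yS xy by blast
  then show "(\<exists>!xs. maxchain_list S le x y xs \<and> weakly_increasing lam xs) \<and>
        (\<forall>xs ys. maxchain_list S le x y xs \<and> weakly_increasing lam xs \<and>
                 maxchain_list S le x y ys \<and> ys \<noteq> xs
                 \<longrightarrow> lex_prec (label_seq lam xs) (label_seq lam ys))"
    unfolding ELpair_def cp_def by (simp add: maxchain_list_iff[OF P xS yS xy])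
qed

lemma cpath_single: "x \<in> S \<Longrightarrow> cpath S le [x]"
  by (simp add: cpath_def)

lemma cpath_Cons:
  assumes "cpath S le xs" "covers S le x (hd xs)"
  shows "cpath S le (x # xs)"
  unfolding cpath_def
proof (intro conjI allI impI)
  show "x # xs \<noteq> []" by simp
  show "set (x#xs) \<subseteq> S" using assms by (auto simp: cpath_def covers_def)
  fix i assume i: "Suc i < length (x#xs)"
  show "covers S le ((x#xs)!i) ((x#xs)!Suc i)"
  proof (cases i)
    case 0 then show ?thesis using assms by (simp add: cpath_def hd_conv_nth)
  next
    case (Suc j) then show ?thesis using assms i by (simp add: cpath_def)
  qed
qed

lemma cpath_take: "cpath S le xs \<Longrightarrow> 0 < j \<Longrightarrow> cpath S le (take j xs)"
  unfolding cpath_def by (auto dest: in_set_takeD)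

lemma cpath_drop:
  assumes c: "cpath S le xs" and j: "j < length xs" shows "cpath S le (drop j xs)"
  unfolding cpath_def
proof (intro conjI allI impI)
  show "drop j xs \<noteq> []" using j by simp
  show "set (drop j xs) \<subseteq> S" using c by (meson cpath_def set_drop_subset subset_trans)
  fix i assume i: "Suc i < length (drop j xs)"
  then have i': "Suc (j+i) < length xs" by simp
  have "covers S le (xs!(j+i)) (xs!Suc (j+i))" using c i' unfolding cpath_def by blast
  then show "covers S le (drop j xs ! i) (drop j xs ! Suc i)" using i' by simp
qed

locale fposet =
  fixes S :: "'a set" and le :: "'a \<Rightarrow> 'a \<Rightarrow> bool"
  assumes fin: "finite S" and P: "poset_on S le"
begin

lemma refl: "x \<in> S \<Longrightarrow> le x x" using poset_reflD[OF P] .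
lemma antisym: "x \<in> S \<Longrightarrow> y \<in> S \<Longrightarrow> le x y \<Longrightarrow> le y x \<Longrightarrow> x = y" using poset_antisymD[OF P] .
lemma trans: "x \<in> S \<Longrightarrow> y \<in> S \<Longrightarrow> z \<in> S \<Longrightarrow> le x y \<Longrightarrow> le y z \<Longrightarrow> le x z" using poset_transD[OF P] .

lemma min_exists:
  assumes "finite A" "A \<noteq> {}" "A \<subseteq> S"
  shows "\<exists>z\<in>A. \<forall>w\<in>A. \<not> strict le w z"
  using assms
proof (induction A rule: finite_ne_induct)
  case (singleton x) then show ?case by (simp add: strict_def)
next
  case (insert a A)
  then obtain z where z: "z \<in> A" "\<forall>w\<in>A. \<not> strict le w z" by auto
  show ?case
  proof (cases "strict le a z")
    case True
    have "\<forall>w\<in>insert a A. \<not> strict le w a"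
    proof
      fix w assume w: "w \<in> insert a A"
      show "\<not> strict le w a"
      proof
        assume wa: "strict le w a"
        then have "w \<noteq> a" by (simp add: strict_def)
        then have wA: "w \<in> A" using w by simp
        have "strict le w z" using strict_trans[OF P, of w a z] wa True insert.prems wA z(1) by auto
        then show False using z wA by blast
      qed
    qed
    then show ?thesis by blast
  next
    case False then show ?thesis using z by blast
  qed
qed

lemma max_exists:
  assumes "finite A" "A \<noteq> {}" "A \<subseteq> S"
  shows "\<exists>z\<in>A. \<forall>w\<in>A. \<not> strict le z w"
proof -
  have "poset_on S (\<lambda>x y. le y x)" using P unfolding poset_on_def by blast
  then interpret d: fposet S "\<lambda>x y. le y x"
    using fin by unfold_locales
  obtain z where "z \<in> A" "\<forall>w\<in>A. \<not> strict (\<lambda>x y. le y x) w z" using d.min_exists[OF assms] by blast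
  then show ?thesis unfolding strict_def by blast
qed

lemma maximal_above:
  assumes lS: "l \<in> S" shows "\<exists>m. is_maximal S le m \<and> le l m"
proof -
  let ?A = "{w\<in>S. le l w}"
  have "?A \<noteq> {}" using lS refl by auto
  then obtain m where m: "m \<in> ?A" "\<forall>w\<in>?A. \<not> strict le m w"
    using max_exists[of ?A] fin by auto
  have "is_maximal S le m"
    unfolding is_maximal_def
  proof (intro conjI notI)
    show "m \<in> S" using m by simp
    assume "\<exists>y\<in>S. strict le m y"
    then obtain y where "y \<in> S" "strict le m y" by blast
    moreover then have "le l y" using m trans[of l m y] lS by (auto simp: strict_def)
    ultimately show False using m by auto
  qed
  then show ?thesis using m by auto
qed

lemma cpath_exists:
  assumes "x \<in> S" "y \<in> S" "le x y"
  shows "\<exists>xs. cp S le x y xs"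
  using assms
proof (induction "card {z\<in>S. strict le x z \<and> le z y}" arbitrary: x rule: less_induct)
  case less
  show ?case
  proof (cases "x = y")
    case True
    have "cp S le x y [x]" using True less.prems(1) by (simp add: cp_def cpath_def)
    then show ?thesis by blast
  next
    case False
    let ?M = "{z\<in>S. strict le x z \<and> le z y}"
    have "y \<in> ?M" using False less.prems refl by (auto simp: strict_def)
    then obtain z where z: "z \<in> ?M" "\<forall>w\<in>?M. \<not> strict le w z"
      using min_exists[of ?M] fin by (metis (no_types, lifting) empty_iff finite_subset mem_Collect_eq subsetI)
    have cov: "covers S le x z"
      unfolding covers_def
    proof (intro conjI notI)
      show "x \<in> S" "z \<in> S" "strict le x z" using less.prems z by auto
      assume "\<exists>w\<in>S. strict le x w \<and> strict le w z"
      then obtain w where w: "w \<in> S" "strict le x w" "strict le w z" by blast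
      then have "le w y" using trans[of w z y] z less.prems(2) by (auto simp: strict_def)
      then show False using w z by auto
    qed
    let ?N = "{w\<in>S. strict le z w \<and> le w y}"
    have "?N \<subseteq> ?M" using strict_trans[OF P, of x z] z less.prems by auto
    moreover have "z \<notin> ?N" by (simp add: strict_def)
    ultimately have "?N \<subset> ?M" using z by blast
    moreover have "finite ?M" by (rule finite_subset[OF _ fin]) auto
    ultimately have "card ?N < card ?M" by (simp add: psubset_card_mono)
    then obtain xs where xs: "cp S le z y xs" using less.hyps[of z] z less.prems(2) by auto
    have "cp S le x y (x # xs)"
      using xs cpath_Cons[of S le xs x] cov unfolding cp_def
      by (auto simp: cpath_def)
    then show ?thesis by blast
  qed
qed

lemma maxchain_exists:
  assumes "finite T" shows "\<exists>C. is_maxchain T le C"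
proof -
  let ?Ch = "{C. is_chain T le C}"
  have "?Ch \<subseteq> Pow T" by (auto simp: is_chain_def)
  then have finC: "finite ?Ch" using assms finite_subset by blast
  have "{} \<in> ?Ch" by (simp add: is_chain_def)
  then have "card ` ?Ch \<noteq> {}" by blast
  then have "Max (card ` ?Ch) \<in> card ` ?Ch" using finC by simp
  then obtain C where C: "C \<in> ?Ch" "card C = Max (card ` ?Ch)" by auto
  have "\<not> (\<exists>D. is_chain T le D \<and> C \<subset> D)"
  proof
    assume "\<exists>D. is_chain T le D \<and> C \<subset> D"
    then obtain D where D: "is_chain T le D" "C \<subset> D" by blast
    have "finite D" using D assms by (meson finite_subset is_chain_def)
    then have "card C < card D" using D psubset_card_mono by blast
    moreover have "card D \<le> Max (card ` ?Ch)" using D finC by simp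
    ultimately show False using C by simp
  qed
  then show ?thesis using C by (auto simp: is_maxchain_def)
qed

lemma cpath_len2:
  assumes "cp S le x y xs" "x \<noteq> y" shows "Suc 0 < length xs"
proof -
  have "xs \<noteq> []" using assms by (simp add: cp_def cpath_def)
  then show ?thesis using assms
    by (cases xs) (auto simp: cp_def)
qed

end

locale spposet = fposet +
  assumes sp: "semipure S le"
begin

abbreviation "r \<equiv> rank S le"

lemma maxchain_down_contains:
  assumes xS: "x \<in> S" and C: "is_maxchain (down_set S le x) le C"
  shows "x \<in> C"
proof (rule ccontr)
  assume "x \<notin> C"
  have "is_chain (down_set S le x) le (insert x C)"
    using C xS refl unfolding is_maxchain_def is_chain_def down_set_def by auto
  moreover have "C \<subset> insert x C" using \<open>x \<notin> C\<close> by auto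
  ultimately show False using C unfolding is_maxchain_def by blast
qed

lemma rank_eq:
  assumes xS: "x \<in> S" and C: "is_maxchain (down_set S le x) le C"
  shows "r x = card C - 1" and "card C = Suc (r x)"
proof -
  have "x \<in> C" using maxchain_down_contains[OF xS C] .
  moreover have "C \<subseteq> S" using C unfolding is_maxchain_def is_chain_def down_set_def by auto
  then have "finite C" using fin finite_subset by blast
  ultimately have cC: "card C = Suc (card C - 1)" by (cases "card C") auto
  have "r x = (THE n. \<exists>C. is_maxchain (down_set S le x) le C \<and> card C = Suc n)" by (simp add: rank_def)
  also have "\<dots> = card C - 1"
  proof (rule the_equality)
    show "\<exists>C'. is_maxchain (down_set S le x) le C' \<and> card C' = Suc (card C - 1)" using C cC by blast
    fix n assume "\<exists>C'. is_maxchain (down_set S le x) le C' \<and> card C' = Suc n"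
    then obtain C' where C': "is_maxchain (down_set S le x) le C'" "card C' = Suc n" by blast
    have "card C' = card C" using sp xS C'(1) C unfolding semipure_def by blast
    then show "n = card C - 1" using C'(2) by simp
  qed
  finally show "r x = card C - 1" .
  then show "card C = Suc (r x)" using cC by simp
qed

lemma rank_cover:
  assumes cov: "covers S le x y"
  shows "r y = Suc (r x)"
proof -
  have xS: "x \<in> S" and yS: "y \<in> S" and xy: "le x y" "x \<noteq> y" using cov by (auto simp: covers_def strict_def)
  have "finite (down_set S le x)" using fin by (simp add: down_set_def)
  then obtain C where C: "is_maxchain (down_set S le x) le C" using maxchain_exists by blast
  have xC: "x \<in> C" using maxchain_down_contains[OF xS C] .
  have Cd: "\<And>c. c \<in> C \<Longrightarrow> c \<in> S \<and> le c x" using C unfolding is_maxchain_def is_chain_def down_set_def by auto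
  have Cch: "\<And>a b. a \<in> C \<Longrightarrow> b \<in> C \<Longrightarrow> le a b \<or> le b a" using C unfolding is_maxchain_def is_chain_def by auto
  have yC: "y \<notin> C" using Cd xy antisym xS yS by blast
  have "is_maxchain (down_set S le y) le (insert y C)"
    unfolding is_maxchain_def
  proof (intro conjI notI)
    show "is_chain (down_set S le y) le (insert y C)"
      unfolding is_chain_def down_set_def
      using Cd Cch refl yS xy trans[of _ x y] xS by auto
    assume "\<exists>D. is_chain (down_set S le y) le D \<and> insert y C \<subset> D"
    then obtain D w where D: "is_chain (down_set S le y) le D" "insert y C \<subseteq> D" "w \<in> D" "w \<notin> insert y C" by blast
    have wS: "w \<in> S" "le w y" using D unfolding is_chain_def down_set_def by auto
    have wc: "\<And>c. c \<in> C \<Longrightarrow> le w c \<or> le c w" using D unfolding is_chain_def by blast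
    show False
    proof (cases "le w x")
      case True
      have "is_chain (down_set S le x) le (insert w C)"
        unfolding is_chain_def down_set_def using True wS Cd Cch wc refl by auto
      moreover have "C \<subset> insert w C" using D by auto
      ultimately show False using C unfolding is_maxchain_def by blast
    next
      case False
      then have "le x w" using wc xC by blast
      then have "strict le x w" "strict le w y" using False D xS refl wS by (auto simp: strict_def)
      then show False using cov wS by (auto simp: covers_def)
    qed
  qed
  then have "card (insert y C) = Suc (r y)" using rank_eq yS by blast
  moreover have "finite C" using Cd fin by (meson finite_subset subsetI)
  ultimately show ?thesis using rank_eq(2)[OF xS C] yC by simp
qed

lemma rank_minimal:
  assumes xS: "x \<in> S" and mn: "\<And>w. w \<in> S \<Longrightarrow> le w x \<Longrightarrow> w = x"
  shows "r x = 0"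
proof -
  have d: "down_set S le x = {x}" using xS mn refl by (auto simp: down_set_def)
  have "is_maxchain (down_set S le x) le {x}"
    unfolding d is_maxchain_def is_chain_def using refl xS by auto
  then show ?thesis using rank_eq(1)[OF xS] by simp
qed

lemma cpath_rank:
  assumes c: "cpath S le xs" shows "i < length xs \<Longrightarrow> r (xs!i) = r (xs!0) + i"
proof (induction i)
  case 0 then show ?case by simp
next
  case (Suc i)
  then have "covers S le (xs!i) (xs!Suc i)" using c by (simp add: cpath_def)
  then show ?case using Suc rank_cover by simp
qed

lemma cp_length:
  assumes c: "cp S le x y xs" shows "length xs = Suc (r y - r x)" "r x \<le> r y"
proof -
  have ne: "xs \<noteq> []" using c by (simp add: cp_def cpath_def)
  have "r (xs!(length xs - 1)) = r (xs!0) + (length xs - 1)"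
    using cpath_rank[of xs "length xs - 1"] c ne by (simp add: cp_def)
  moreover have "xs!0 = x" "xs!(length xs - 1) = y" using c ne by (auto simp: cp_def hd_conv_nth last_conv_nth)
  ultimately show "length xs = Suc (r y - r x)" "r x \<le> r y" using ne by auto
qed

lemma rank_strict:
  assumes "x \<in> S" "y \<in> S" "strict le x y" shows "r x < r y"
proof -
  obtain xs where c: "cp S le x y xs" using cpath_exists assms by (auto simp: strict_def)
  have "Suc 0 < length xs" using cpath_len2[OF c] assms by (simp add: strict_def)
  then show ?thesis using cp_length[OF c] by simp
qed

lemma rank_mono:
  assumes "x \<in> S" "y \<in> S" "le x y" shows "r x \<le> r y"
  using rank_strict[of x y] assms by (cases "x = y") (auto simp: strict_def)

lemma eq_of_le_rank:
  assumes "x \<in> S" "y \<in> S" "le x y" "r y \<le> r x" shows "x = y"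
  using rank_strict[of x y] assms by (auto simp: strict_def)

end



section \<open>Label sequences\<close>

lemma label_seq_Nil[simp]: "label_seq f [] = []" by (simp add: label_seq_def)
lemma label_seq_single[simp]: "label_seq f [a] = []" by (simp add: label_seq_def)
lemma label_seq_Cons2[simp]: "label_seq f (a # b # xs) = f a b # label_seq f (b # xs)"
  by (simp add: label_seq_def)
lemma label_seq_Cons: "label_seq f (a # ys) = (if ys = [] then [] else f a (hd ys) # label_seq f ys)"
  by (cases ys) auto
lemma length_label_seq[simp]: "length (label_seq f xs) = length xs - 1"
  by (simp add: label_seq_def)
lemma label_seq_nth: "Suc i < length xs \<Longrightarrow> label_seq f xs ! i = f (xs!i) (xs!Suc i)"
  by (simp add: label_seq_def nth_tl)

definition winc :: "'l::order list \<Rightarrow> bool" where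
  "winc ls \<longleftrightarrow> (\<forall>i. Suc i < length ls \<longrightarrow> ls!i \<le> ls!Suc i)"

lemma wi_winc: "weakly_increasing lam xs \<longleftrightarrow> winc (label_seq lam xs)"
  unfolding weakly_increasing_def winc_def
proof (intro iffI allI impI)
  fix i assume A: "\<forall>i. Suc (Suc i) < length xs \<longrightarrow> lam (xs ! i) (xs ! Suc i) \<le> lam (xs ! Suc i) (xs ! Suc (Suc i))"
    and i: "Suc i < length (label_seq lam xs)"
  then show "label_seq lam xs ! i \<le> label_seq lam xs ! Suc i" by (simp add: label_seq_nth)
next
  fix i assume A: "\<forall>i. Suc i < length (label_seq lam xs) \<longrightarrow> label_seq lam xs ! i \<le> label_seq lam xs ! Suc i"
    and i: "Suc (Suc i) < length xs"
  then have "label_seq lam xs ! i \<le> label_seq lam xs ! Suc i" by simp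
  then show "lam (xs ! i) (xs ! Suc i) \<le> lam (xs ! Suc i) (xs ! Suc (Suc i))" using i
    by (simp add: label_seq_nth)
qed

lemma winc_le: assumes "winc ls" shows "i \<le> j \<Longrightarrow> j < length ls \<Longrightarrow> ls!i \<le> ls!j"
proof (induction j)
  case 0 then show ?case by simp
next
  case (Suc j)
  show ?case
  proof (cases "i = Suc j")
    case True then show ?thesis by simp
  next
    case False
    then have "ls!i \<le> ls!j" using Suc by simp
    also have "ls!j \<le> ls!Suc j" using assms Suc.prems unfolding winc_def by simp
    finally show ?thesis .
  qed
qed

lemma winc_zip:
  assumes "length A = length B"
  shows "winc (zip A B) \<longleftrightarrow> winc A \<and> winc B"
  using assms unfolding winc_def by auto

lemma winc_appendI:
  assumes "winc (map Some X)"
  shows "winc (replicate j None @ map Some X)"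
  unfolding winc_def
proof (intro allI impI)
  fix i assume i: "Suc i < length (replicate j None @ map Some X)"
  show "(replicate j None @ map Some X) ! i \<le> (replicate j None @ map Some X) ! Suc i"
  proof (cases "Suc i < j")
    case True then show ?thesis by (simp add: nth_append)
  next
    case False
    show ?thesis
    proof (cases "i < j")
      case True then show ?thesis by (simp add: nth_append)
    next
      case False
      then have "Suc (i - j) < length (map Some X)" using i by simp
      then have "map Some X ! (i - j) \<le> map Some X ! Suc (i - j)" using assms unfolding winc_def by blast
      moreover have "Suc i - j = Suc (i - j)" using False by simp
      ultimately show ?thesis using False by (simp add: nth_append)
    qed
  qed
qed

lemma winc_map_Some: "winc (map Some X) \<longleftrightarrow> winc X"
  unfolding winc_def by simp

lemma lex_neq: "lex_prec X Y \<Longrightarrow> X \<noteq> Y"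
  unfolding lex_prec_def by auto

lemma prod_less1: "fst (a::'a::order \<times> 'b::order) < fst c \<Longrightarrow> snd a \<le> snd c \<Longrightarrow> a < c"
  unfolding less_prod_def less_eq_prod_def by (metis order.strict_iff_not)
lemma prod_less2: "fst (a::'a::order \<times> 'b::order) \<le> fst c \<Longrightarrow> snd a < snd c \<Longrightarrow> a < c"
  unfolding less_prod_def less_eq_prod_def by (metis order.strict_iff_not)

lemma lex_zip:
  assumes lAB: "length A = length B" and lAB': "length A' = length B'"
    and a: "A = A' \<or> lex_prec A A'" and b: "B = B' \<or> lex_prec B B'"
    and s: "lex_prec A A' \<or> lex_prec B B'"
  shows "lex_prec (zip A B) (zip A' B')"
proof -
  have tk: "\<And>X Y i j. take j X = take j Y \<Longrightarrow> i < j \<Longrightarrow> X!i = Y!i"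
    by (metis nth_take)
  have tk2: "\<And>X Y i j. take j X = take j Y \<Longrightarrow> i \<le> j \<Longrightarrow> take i X = take i Y"
    by (metis min.absorb1 take_take)
  note pl = prod_less1 and pl2 = prod_less2
  show ?thesis
  proof (cases "lex_prec A A'")
    case True
    then obtain i1 where i1: "i1 < length A" "i1 < length A'" "take i1 A = take i1 A'" "A!i1 < A'!i1"
      unfolding lex_prec_def by blast
    show ?thesis
    proof (cases "B = B'")
      case True
      show ?thesis unfolding lex_prec_def
        using i1 lAB lAB' True by (intro exI[of _ i1]) (auto simp: take_zip intro!: pl)
    next
      case False
      then obtain i2 where i2: "i2 < length B" "i2 < length B'" "take i2 B = take i2 B'" "B!i2 < B'!i2"
        using b unfolding lex_prec_def by blast
      define i where "i = min i1 i2"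
      have ti: "take i A = take i A'" "take i B = take i B'"
        using tk2[OF i1(3), of i] tk2[OF i2(3), of i] unfolding i_def by auto
      have "(A!i, B!i) < (A'!i, B'!i)"
      proof (cases "i1 \<le> i2")
        case True
        then have "i = i1" by (simp add: i_def)
        moreover have "B!i \<le> B'!i" using i2 tk[of i2 B B' i] True \<open>i = i1\<close>
          by (cases "i1 = i2") (auto simp: less_imp_le)
        ultimately show ?thesis using i1 by (intro pl) auto
      next
        case False
        then have "i = i2" by (simp add: i_def)
        moreover have "A!i = A'!i" using i1 tk[of i1 A A' i] False \<open>i = i2\<close> by simp
        ultimately show ?thesis using i2 by (intro pl2) auto
      qed
      then show ?thesis unfolding lex_prec_def using ti i1 i2 lAB lAB' unfolding i_def
        by (intro exI[of _ "min i1 i2"]) (auto simp: take_zip)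
    qed
  next
    case False
    then have AA: "A = A'" using a by simp
    then obtain i2 where i2: "i2 < length B" "i2 < length B'" "take i2 B = take i2 B'" "B!i2 < B'!i2"
      using s False unfolding lex_prec_def by blast
    show ?thesis unfolding lex_prec_def
      using i2 lAB lAB' AA by (intro exI[of _ i2]) (auto simp: take_zip intro!: pl2)
  qed
qed

lemma lex_append: "lex_prec X Y \<Longrightarrow> lex_prec (Z @ X) (Z @ Y)"
  unfolding lex_prec_def
proof (elim exE conjE)
  fix i assume i: "i < length X" "i < length Y" "take i X = take i Y" "X!i < Y!i"
  show "\<exists>i. i < length (Z @ X) \<and> i < length (Z @ Y) \<and> take i (Z @ X) = take i (Z @ Y) \<and> (Z @ X) ! i < (Z @ Y) ! i"
    using i by (intro exI[of _ "length Z + i"]) (simp add: nth_append)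
qed

lemma lex_map_Some: "lex_prec X Y \<Longrightarrow> lex_prec (map Some X) (map Some Y)"
  unfolding lex_prec_def by (auto simp: take_map)

lemma lex_firstI:
  assumes "j < length X" "j < length Y" "\<And>i. i < j \<Longrightarrow> X!i = Y!i" "X!j < Y!j"
  shows "lex_prec X Y"
  unfolding lex_prec_def
  using assms by (intro exI[of _ j]) (auto simp: list_eq_iff_nth_eq)

lemma label_seq_rep:
  assumes "K \<noteq> []" "hd K = k"
  shows "label_seq f (replicate j k @ K) = replicate j (f k k) @ label_seq f K"
proof (induction j)
  case 0 then show ?case by simp
next
  case (Suc j)
  have "hd (replicate j k @ K) = k" using assms by (cases j) auto
  then show ?case using Suc assms by (simp add: label_seq_Cons[of f k])
qed

section \<open>Hats\<close>

lemma hat_mem[simp]: "HBot \<in> hat_carrier S" "HTop \<in> hat_carrier S" "Mid x \<in> hat_carrier S \<longleftrightarrow> x \<in> S"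
  by (auto simp: hat_carrier_def)

lemma hat_cases:
  assumes "x \<in> hat_carrier S"
  obtains "x = HBot" | "x = HTop" | a where "x = Mid a" "a \<in> S"
  using assms by (auto simp: hat_carrier_def)

lemma hat_le_simps[simp]:
  "hat_le le HBot y" "hat_le le x HTop" "hat_le le (Mid a) HBot \<longleftrightarrow> False"
  "hat_le le HTop HBot \<longleftrightarrow> False" "hat_le le HTop (Mid b) \<longleftrightarrow> False"
  by (cases x; simp)+

lemma hat_le_HBot: "hat_le le x HBot \<longleftrightarrow> x = HBot" by (cases x) auto
lemma hat_le_HTop: "hat_le le HTop x \<longleftrightarrow> x = HTop" by (cases x) auto

lemma hat_poset:
  assumes P: "poset_on S le" shows "poset_on (hat_carrier S) (hat_le le)"
  unfolding poset_on_def
proof (intro conjI ballI impI)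
  fix x assume "x \<in> hat_carrier S" then show "hat_le le x x"
    by (cases rule: hat_cases) (auto simp: poset_reflD[OF P])
next
  fix x y assume x: "x \<in> hat_carrier S" and y: "y \<in> hat_carrier S" and "hat_le le x y \<and> hat_le le y x"
  then show "x = y" using x y
    by (cases rule: hat_cases[OF x]; cases rule: hat_cases[OF y]) (auto simp: hat_le_HBot hat_le_HTop poset_antisymD[OF P])
next
  fix x y z assume x: "x \<in> hat_carrier S" and y: "y \<in> hat_carrier S" and z: "z \<in> hat_carrier S"
    and "hat_le le x y \<and> hat_le le y z"
  then show "hat_le le x z"
    by (cases rule: hat_cases[OF x]; cases rule: hat_cases[OF y]; cases rule: hat_cases[OF z])
       (auto simp: hat_le_HBot hat_le_HTop intro: poset_transD[OF P])
qed

lemma cov_hat_BM: "covers (hat_carrier S) (hat_le le) HBot (Mid y) \<longleftrightarrow> y \<in> S \<and> (\<forall>w\<in>S. le w y \<longrightarrow> w = y)"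
  unfolding covers_def strict_def hat_carrier_def by auto

lemma cov_hat_MT: "covers (hat_carrier S) (hat_le le) (Mid x) HTop \<longleftrightarrow> x \<in> S \<and> (\<forall>w\<in>S. le x w \<longrightarrow> w = x)"
  unfolding covers_def strict_def hat_carrier_def by auto

lemma cov_hat_MM: "covers (hat_carrier S) (hat_le le) (Mid x) (Mid y) \<longleftrightarrow> covers S le x y"
  unfolding covers_def strict_def hat_carrier_def by auto

lemma cov_hat_BT: "covers (hat_carrier S) (hat_le le) HBot HTop \<longleftrightarrow> S = {}"
  unfolding covers_def strict_def hat_carrier_def by auto

lemma cov_hat_xB: "\<not> covers (hat_carrier S) (hat_le le) x HBot"
  unfolding covers_def strict_def by (auto simp: hat_le_HBot)

lemma cov_hat_Tx: "\<not> covers (hat_carrier S) (hat_le le) HTop x"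
  unfolding covers_def strict_def by (auto simp: hat_le_HTop)



lemma cp_ends:
  assumes c: "cp S le x y xs" shows "xs \<noteq> []" "xs!0 = x" "xs!(length xs - 1) = y"
proof -
  show ne: "xs \<noteq> []" using c by (simp add: cp_def cpath_def)
  show "xs!0 = x" "xs!(length xs - 1) = y"
    using c hd_conv_nth[OF ne] last_conv_nth[OF ne] by (auto simp: cp_def)
qed

context fposet begin

lemma cover_up:
  assumes "x \<in> S" "y \<in> S" "strict le x y" shows "\<exists>w. covers S le x w \<and> le w y"
proof -
  obtain xs where c: "cp S le x y xs" using cpath_exists assms by (auto simp: strict_def)
  have l: "Suc 0 < length xs" using cpath_len2[OF c] assms by (simp add: strict_def)
  have "covers S le (xs!0) (xs!1)" using c l by (simp add: cp_def cpath_def)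
  moreover have "xs!0 = x" "xs!(length xs - 1) = y" using cp_ends[OF c] by auto
  moreover have "le (xs!1) (xs!(length xs - 1))" using cpath_le_nth[OF P, of xs 1 "length xs - 1"] c l
    by (simp add: cp_def)
  ultimately show ?thesis by auto
qed

lemma cover_down:
  assumes "x \<in> S" "y \<in> S" "strict le x y" shows "\<exists>w. covers S le w y \<and> le x w"
proof -
  obtain xs where c: "cp S le x y xs" using cpath_exists assms by (auto simp: strict_def)
  have l: "Suc 0 < length xs" using cpath_len2[OF c] assms by (simp add: strict_def)
  have "covers S le (xs!(length xs - 2)) (xs!Suc (length xs - 2))" using c l by (simp add: cp_def cpath_def)
  moreover have "Suc (length xs - 2) = length xs - 1" using l by simp
  moreover have "xs!0 = x" "xs!(length xs - 1) = y" using cp_ends[OF c] by auto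
  moreover have "le (xs!0) (xs!(length xs - 2))" using cpath_le_nth[OF P, of xs 0 "length xs - 2"] c l
    by (simp add: cp_def)
  ultimately show ?thesis by auto
qed

end

lemma cp_convex:
  assumes P: "poset_on S le" and TS: "T \<subseteq> S"
    and cv: "\<And>a b c. a \<in> T \<Longrightarrow> b \<in> T \<Longrightarrow> c \<in> S \<Longrightarrow> le a c \<Longrightarrow> le c b \<Longrightarrow> c \<in> T"
    and xT: "x \<in> T" and yT: "y \<in> T"
  shows "cp T le x y xs \<longleftrightarrow> cp S le x y xs"
proof
  have covT: "\<And>a b. a \<in> T \<Longrightarrow> b \<in> T \<Longrightarrow> covers S le a b \<Longrightarrow> covers T le a b"
    unfolding covers_def using TS by blast
  have covS: "\<And>a b. a \<in> T \<Longrightarrow> b \<in> T \<Longrightarrow> covers T le a b \<Longrightarrow> covers S le a b"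
  proof -
    fix a b assume a: "a \<in> T" "b \<in> T" "covers T le a b"
    show "covers S le a b" unfolding covers_def
    proof (intro conjI notI)
      show "a \<in> S" "b \<in> S" "strict le a b" using a TS by (auto simp: covers_def)
      assume "\<exists>z\<in>S. strict le a z \<and> strict le z b"
      then obtain z where "z \<in> S" "strict le a z" "strict le z b" by blast
      moreover then have "z \<in> T" using cv[of a b z] a by (auto simp: strict_def)
      ultimately show False using a by (auto simp: covers_def)
    qed
  qed
  {
    assume c: "cp T le x y xs"
    have PT: "poset_on T le" using P TS unfolding poset_on_def by blast
    have inT: "\<And>i. i < length xs \<Longrightarrow> xs!i \<in> T" using c cpath_nth_in unfolding cp_def by blast
    show "cp S le x y xs"
      unfolding cp_def cpath_def
    proof (intro conjI allI impI)
      show "xs \<noteq> []" "hd xs = x" "last xs = y" using c by (auto simp: cp_def cpath_def)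
      show "set xs \<subseteq> S" using c TS by (auto simp: cp_def cpath_def)
      fix i assume i: "Suc i < length xs"
      then show "covers S le (xs!i) (xs!Suc i)" using covS[OF inT inT] c by (auto simp: cp_def cpath_def)
    qed
  }
  {
    assume c: "cp S le x y xs"
    have ne: "xs \<noteq> []" using c by (simp add: cp_def cpath_def)
    have inT: "\<And>i. i < length xs \<Longrightarrow> xs!i \<in> T"
    proof -
      fix i assume i: "i < length xs"
      have "le (xs!0) (xs!i)" "le (xs!i) (xs!(length xs - 1))"
        using cpath_le_nth[OF P, of xs] c i by (auto simp: cp_def)
      moreover have "xs!0 = x" "xs!(length xs - 1) = y" using cp_ends[OF c] by auto
      moreover have "xs!i \<in> S" using cpath_nth_in c i by (auto simp: cp_def)
      ultimately show "xs!i \<in> T" using cv[of x y "xs!i"] xT yT by auto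
    qed
    show "cp T le x y xs"
      using c inT covT unfolding cp_def cpath_def by (auto simp: set_conv_nth)
  }
qed

lemma ELpair_convex:
  assumes P: "poset_on S le" and TS: "T \<subseteq> S"
    and cv: "\<And>a b c. a \<in> T \<Longrightarrow> b \<in> T \<Longrightarrow> c \<in> S \<Longrightarrow> le a c \<Longrightarrow> le c b \<Longrightarrow> c \<in> T"
    and xT: "x \<in> T" and yT: "y \<in> T"
  shows "ELpair T le lam x y \<longleftrightarrow> ELpair S le lam x y"
  unfolding ELpair_def using cp_convex[OF P TS cv xT yT] by simp

section \<open>The Rees setting\<close>

fun pp1 :: "('a \<times> 'b) hat \<Rightarrow> 'a hat" where
  "pp1 HBot = HBot" | "pp1 (Mid xk) = Mid (fst xk)" | "pp1 HTop = HTop"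
fun pp2 :: "'b \<Rightarrow> ('a \<times> 'b) hat \<Rightarrow> 'b" where
  "pp2 z HBot = z" | "pp2 z (Mid xk) = snd xk" | "pp2 z HTop = z"
fun mk :: "'a hat \<Rightarrow> 'b \<Rightarrow> ('a \<times> 'b) hat" where
  "mk HBot q = HBot" | "mk (Mid x) q = Mid (x, q)" | "mk HTop q = HTop"

lemma mk_pp: "mk (pp1 a) (pp2 z a) = a" by (cases a) auto
lemma pp1_mk[simp]: "pp1 (mk a q) = a" by (cases a) auto

definition sec2 :: "('b \<Rightarrow> 'b \<Rightarrow> 'l) \<Rightarrow> 'b \<Rightarrow> 'b \<Rightarrow> 'l option" where
  "sec2 l2 a b = (if a = b then None else Some (l2 a b))"
definition sec :: "('b \<Rightarrow> 'b \<Rightarrow> 'l) \<Rightarrow> 'b \<Rightarrow> ('a \<times> 'b) hat \<Rightarrow> ('a \<times> 'b) hat \<Rightarrow> 'l option" where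
  "sec l2 z a b = (if b = HTop then None else sec2 l2 (pp2 z a) (pp2 z b))"

lemma hat_pair_cases:
  obtains "a = HBot" | "a = HTop" | x k where "a = Mid (x, k)"
  by (cases a) auto

lemma rees_label_eq:
  assumes "a \<noteq> HTop" "b \<noteq> HBot"
  shows "rees_label l1 l2 z a b = (l1 (pp1 a) (pp1 b), sec l2 z a b)"
  using assms
  by (cases a rule: hat_pair_cases; cases b rule: hat_pair_cases) (auto simp: sec_def sec2_def)

lemma label_seq_rees:
  assumes "\<And>i. Suc i < length D \<Longrightarrow> D!i \<noteq> HTop \<and> D!Suc i \<noteq> HBot"
  shows "label_seq (rees_label l1 l2 z) D = zip (label_seq l1 (map pp1 D)) (label_seq (sec l2 z) D)"
  by (rule nth_equalityI) (auto simp: label_seq_nth rees_label_eq assms)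

lemma sec_noTop:
  assumes "\<And>i. i < length D \<Longrightarrow> D!i \<noteq> HTop"
  shows "label_seq (sec l2 z) D = label_seq (sec2 l2) (map (pp2 z) D)"
  by (rule nth_equalityI) (auto simp: label_seq_nth sec_def assms)

lemma sec2_path:
  assumes "\<And>i. Suc i < length K \<Longrightarrow> K!i \<noteq> K!Suc i"
  shows "label_seq (sec2 l2) K = map Some (label_seq l2 K)"
  by (rule nth_equalityI) (auto simp: label_seq_nth sec2_def assms)

locale rees =
  fixes S1 :: "'a set" and le1 :: "'a \<Rightarrow> 'a \<Rightarrow> bool"
    and S2 :: "'b set" and le2 :: "'b \<Rightarrow> 'b \<Rightarrow> bool"
    and z2 :: 'b
    and lam1 :: "'a hat \<Rightarrow> 'a hat \<Rightarrow> 'l1::order"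
    and lam2 :: "'b \<Rightarrow> 'b \<Rightarrow> 'l2::order"
  assumes fp1: "finite_poset S1 le1" and sp1: "semipure S1 le1"
    and fp2: "finite_poset S2 le2" and sp2: "semipure S2 le2"
    and zmin: "is_minimum S2 le2 z2"
    and EL1: "EL_labeling (hat_carrier S1) (hat_le le1) lam1"
    and EL2: "semi_EL_labeling S2 le2 z2 lam2"
begin

sublocale A: spposet S1 le1
  using fp1 sp1 by unfold_locales (auto simp: finite_poset_def)
sublocale B: spposet S2 le2
  using fp2 sp2 by unfold_locales (auto simp: finite_poset_def)

abbreviation "R \<equiv> rees_carrier S1 le1 S2 le2"
abbreviation "leR \<equiv> rees_le S1 le1 S2 le2"
abbreviation "H \<equiv> hat_carrier R"
abbreviation "leH \<equiv> hat_le leR"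
abbreviation "H1 \<equiv> hat_carrier S1"
abbreviation "leH1 \<equiv> hat_le le1"
abbreviation "r1 \<equiv> rank S1 le1"
abbreviation "r2 \<equiv> rank S2 le2"
abbreviation "p2 \<equiv> pp2 z2"

lemma R_mem: "(x, k) \<in> R \<longleftrightarrow> x \<in> S1 \<and> k \<in> S2 \<and> r2 k \<le> r1 x"
  by (simp add: rees_carrier_def)

lemma leR_iff: "leR (x, k) (y, l) \<longleftrightarrow> le1 x y \<and> le2 k l \<and> int (r2 l) - int (r2 k) \<le> int (r1 y) - int (r1 x)"
  by (simp add: rees_le_def)

lemma z2S: "z2 \<in> S2" and z2le: "k \<in> S2 \<Longrightarrow> le2 z2 k"
  using zmin by (auto simp: is_minimum_def)

lemma r2z2: "r2 z2 = 0"
  using B.rank_minimal[OF z2S] z2le B.antisym z2S by blast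

lemma r2_0: "k \<in> S2 \<Longrightarrow> r2 k = 0 \<Longrightarrow> k = z2"
  using B.eq_of_le_rank[OF z2S _ z2le] r2z2 by auto

lemma leR_same_fst:
  assumes "k \<in> S2" "l \<in> S2" "leR (x, k) (x, l)" shows "k = l"
  using assms B.eq_of_le_rank[of k l] by (auto simp: leR_iff)

lemma poset_R: "poset_on R leR"
  unfolding poset_on_def
proof (intro conjI ballI impI)
  fix u assume "u \<in> R" then show "leR u u"
    by (cases u) (auto simp: leR_iff R_mem A.refl B.refl)
next
  fix u v assume u: "u \<in> R" and v: "v \<in> R" and "leR u v \<and> leR v u"
  then show "u = v"
    by (cases u; cases v) (auto simp: leR_iff R_mem intro: A.antisym B.antisym)
next
  fix u v w assume u: "u \<in> R" and v: "v \<in> R" and w: "w \<in> R" and "leR u v \<and> leR v w"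
  then show "leR u w"
    by (cases u; cases v; cases w) (auto simp: leR_iff R_mem intro: A.trans B.trans)
qed

lemma poset_H: "poset_on H leH" using hat_poset[OF poset_R] .
lemma poset_H1: "poset_on H1 leH1" using hat_poset[OF A.P] .

end



context rees begin

lemma covR:
  assumes xk: "(x,k) \<in> R" and yl: "(y,l) \<in> R"
  shows "covers R leR (x,k) (y,l) \<longleftrightarrow> covers S1 le1 x y \<and> (k = l \<or> covers S2 le2 k l)"
proof
  assume cov: "covers R leR (x,k) (y,l)"
  have mem: "x \<in> S1" "k \<in> S2" "r2 k \<le> r1 x" "y \<in> S1" "l \<in> S2" "r2 l \<le> r1 y" using xk yl by (auto simp: R_mem)
  have le: "le1 x y" "le2 k l" and rk: "int (r2 l) - int (r2 k) \<le> int (r1 y) - int (r1 x)" and ne: "(x,k) \<noteq> (y,l)"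
    using cov by (auto simp: covers_def strict_def leR_iff)
  have nob: "\<And>z. z \<in> R \<Longrightarrow> leR (x,k) z \<Longrightarrow> leR z (y,l) \<Longrightarrow> z = (x,k) \<or> z = (y,l)"
    using cov unfolding covers_def strict_def by blast
  have xy: "x \<noteq> y"
  proof
    assume "x = y"
    then have "leR (x,k) (x,l)" using cov by (simp add: covers_def strict_def)
    then have "k = l" using leR_same_fst[of k l x] mem by auto
    then show False using ne \<open>x = y\<close> by simp
  qed
  have sxy: "strict le1 x y" using le xy by (simp add: strict_def)
  have c1: "covers S1 le1 x y"
  proof (rule ccontr)
    assume nc: "\<not> covers S1 le1 x y"
    obtain w where w: "covers S1 le1 x w" "le1 w y" using A.cover_up[OF mem(1) mem(4) sxy] by blast
    have wS: "w \<in> S1" and rw: "r1 w = Suc (r1 x)" using w A.rank_cover by (auto simp: covers_def)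
    have wy: "w \<noteq> y" using w nc by auto
    have lxw: "le1 x w" "w \<noteq> x" using w by (auto simp: covers_def strict_def)
    have rwy: "r1 w < r1 y" using A.rank_strict[OF wS mem(4)] w wy by (simp add: strict_def)
    show False
    proof (cases "int (r2 l) - int (r2 k) \<le> int (r1 y) - int (r1 w)")
      case True
      have "(w,k) \<in> R" using wS mem rw by (simp add: R_mem)
      moreover have "leR (x,k) (w,k)" using lxw B.refl mem rw by (simp add: leR_iff)
      moreover have "leR (w,k) (y,l)" using w le True by (simp add: leR_iff)
      ultimately show False using nob[of "(w,k)"] lxw wy by auto
    next
      case False
      then have kl: "k \<noteq> l" using rwy by auto
      then have skl: "strict le2 k l" using le by (simp add: strict_def)
      obtain q where q: "covers S2 le2 k q" "le2 q l" using B.cover_up[OF mem(2) mem(5) skl] by blast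
      have qS: "q \<in> S2" and rq: "r2 q = Suc (r2 k)" using q B.rank_cover by (auto simp: covers_def)
      have lkq: "le2 k q" using q by (auto simp: covers_def strict_def)
      have "(w,q) \<in> R" using wS qS rq rw mem by (simp add: R_mem)
      moreover have "leR (x,k) (w,q)" using lxw lkq rq rw by (simp add: leR_iff)
      moreover have "leR (w,q) (y,l)" using w q rq rw rk False by (simp add: leR_iff)
      ultimately show False using nob[of "(w,q)"] lxw wy by auto
    qed
  qed
  have ry: "r1 y = Suc (r1 x)" using A.rank_cover[OF c1] .
  have c2: "k = l \<or> covers S2 le2 k l"
  proof (rule ccontr)
    assume "\<not> (k = l \<or> covers S2 le2 k l)"
    then have kl: "k \<noteq> l" and nc: "\<not> covers S2 le2 k l" by auto
    then have skl: "strict le2 k l" using le by (simp add: strict_def)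
    obtain q where q: "covers S2 le2 k q" "le2 q l" using B.cover_up[OF mem(2) mem(5) skl] by blast
    have qS: "q \<in> S2" and rq: "r2 q = Suc (r2 k)" using q B.rank_cover by (auto simp: covers_def)
    have "q \<noteq> l" using q nc by auto
    then have "r2 q < r2 l" using B.rank_strict[OF qS mem(5)] q by (simp add: strict_def)
    then show False using rk ry rq by simp
  qed
  show "covers S1 le1 x y \<and> (k = l \<or> covers S2 le2 k l)" using c1 c2 by blast
next
  assume h: "covers S1 le1 x y \<and> (k = l \<or> covers S2 le2 k l)"
  have mem: "x \<in> S1" "k \<in> S2" "y \<in> S1" "l \<in> S2" using xk yl by (auto simp: R_mem)
  have ry: "r1 y = Suc (r1 x)" using A.rank_cover h by blast
  have lxy: "le1 x y" "x \<noteq> y" using h by (auto simp: covers_def strict_def)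
  have lk: "le2 k l" and rl: "r2 l \<le> Suc (r2 k)"
    using h B.refl mem B.rank_cover[of k l] by (auto simp: covers_def strict_def)
  have rl0: "r2 k \<le> r2 l" using B.rank_mono mem lk by blast
  show "covers R leR (x,k) (y,l)" unfolding covers_def strict_def
  proof (intro conjI notI)
    show "(x,k) \<in> R" "(y,l) \<in> R" by (fact xk, fact yl)
    show "leR (x,k) (y,l)" using lxy lk ry rl rl0 by (simp add: leR_iff)
    show "(x,k) = (y,l) \<Longrightarrow> False" using lxy by simp
    assume "\<exists>z\<in>R. (leR (x,k) z \<and> (x,k) \<noteq> z) \<and> (leR z (y,l) \<and> z \<noteq> (y,l))"
    then obtain p q where pq: "(p,q) \<in> R" "leR (x,k) (p,q)" "(x,k) \<noteq> (p,q)" "leR (p,q) (y,l)" "(p,q) \<noteq> (y,l)"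
      by auto
    have pS: "p \<in> S1" "q \<in> S2" using pq by (auto simp: R_mem)
    have lp: "le1 x p" "le1 p y" using pq by (auto simp: leR_iff)
    have "p = x \<or> p = y"
    proof (rule ccontr)
      assume "\<not> (p = x \<or> p = y)"
      then have "strict le1 x p" "strict le1 p y" using lp by (auto simp: strict_def)
      then show False using h pS by (auto simp: covers_def)
    qed
    then show False
    proof
      assume "p = x"
      then have "k = q" using leR_same_fst[of k q x] pq pS mem by auto
      then show False using pq \<open>p = x\<close> by simp
    next
      assume "p = y"
      then have "q = l" using leR_same_fst[of q l y] pq pS mem by auto
      then show False using pq \<open>p = y\<close> by simp
    qed
  qed
qed

lemma minR_iff:
  assumes yl: "(y,l) \<in> R"
  shows "(\<forall>w\<in>R. leR w (y,l) \<longrightarrow> w = (y,l)) \<longleftrightarrow> (\<forall>w\<in>S1. le1 w y \<longrightarrow> w = y)"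
proof
  assume mn: "\<forall>w\<in>R. leR w (y,l) \<longrightarrow> w = (y,l)"
  have mem: "y \<in> S1" "l \<in> S2" "r2 l \<le> r1 y" using yl by (auto simp: R_mem)
  show "\<forall>w\<in>S1. le1 w y \<longrightarrow> w = y"
  proof (intro ballI impI, rule ccontr)
    fix w assume w: "w \<in> S1" "le1 w y" "w \<noteq> y"
    then have swy: "strict le1 w y" by (simp add: strict_def)
    obtain w' where w': "covers S1 le1 w' y" "le1 w w'" using A.cover_down[OF w(1) mem(1) swy] by blast
    have w'S: "w' \<in> S1" and rw: "r1 y = Suc (r1 w')" using w' A.rank_cover by (auto simp: covers_def)
    have lw'y: "le1 w' y" "w' \<noteq> y" using w' by (auto simp: covers_def strict_def)
    show False
    proof (cases "r2 l \<le> r1 w'")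
      case True
      have "(w',l) \<in> R" using w'S mem True by (simp add: R_mem)
      moreover have "leR (w',l) (y,l)" using lw'y B.refl mem rw by (simp add: leR_iff)
      ultimately show False using mn lw'y by auto
    next
      case False
      then have "l \<noteq> z2" using r2z2 by auto
      then have szl: "strict le2 z2 l" using z2le mem by (simp add: strict_def)
      obtain q where q: "covers S2 le2 q l" "le2 z2 q" using B.cover_down[OF z2S mem(2) szl] by blast
      have qS: "q \<in> S2" and rq: "r2 l = Suc (r2 q)" using q B.rank_cover by (auto simp: covers_def)
      have lql: "le2 q l" "q \<noteq> l" using q by (auto simp: covers_def strict_def)
      have "(w',q) \<in> R" using w'S qS rq rw mem False by (simp add: R_mem)
      moreover have "leR (w',q) (y,l)" using lw'y lql rq rw by (simp add: leR_iff)
      ultimately show False using mn lw'y by auto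
    qed
  qed
next
  assume mn: "\<forall>w\<in>S1. le1 w y \<longrightarrow> w = y"
  have mem: "y \<in> S1" "l \<in> S2" "r2 l \<le> r1 y" using yl by (auto simp: R_mem)
  have "r1 y = 0" using A.rank_minimal mem mn by blast
  then have lz: "l = z2" using r2_0 mem by simp
  show "\<forall>w\<in>R. leR w (y,l) \<longrightarrow> w = (y,l)"
  proof (intro ballI impI)
    fix w assume w: "w \<in> R" "leR w (y,l)"
    obtain p q where pq: "w = (p,q)" by (cases w)
    have "p \<in> S1" "q \<in> S2" using w pq by (auto simp: R_mem)
    moreover have "le1 p y" "le2 q l" using w pq by (auto simp: leR_iff)
    ultimately show "w = (y,l)" using mn pq lz z2le B.antisym z2S by auto
  qed
qed

lemma maxR_iff:
  assumes xk: "(x,k) \<in> R"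
  shows "(\<forall>w\<in>R. leR (x,k) w \<longrightarrow> w = (x,k)) \<longleftrightarrow> (\<forall>w\<in>S1. le1 x w \<longrightarrow> w = x)"
proof
  assume mx: "\<forall>w\<in>R. leR (x,k) w \<longrightarrow> w = (x,k)"
  have mem: "x \<in> S1" "k \<in> S2" "r2 k \<le> r1 x" using xk by (auto simp: R_mem)
  show "\<forall>w\<in>S1. le1 x w \<longrightarrow> w = x"
  proof (intro ballI impI, rule ccontr)
    fix w assume w: "w \<in> S1" "le1 x w" "w \<noteq> x"
    then have sxw: "strict le1 x w" by (simp add: strict_def)
    obtain w' where w': "covers S1 le1 x w'" "le1 w' w" using A.cover_up[OF mem(1) w(1) sxw] by blast
    have w'S: "w' \<in> S1" and rw: "r1 w' = Suc (r1 x)" using w' A.rank_cover by (auto simp: covers_def)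
    have lxw': "le1 x w'" "w' \<noteq> x" using w' by (auto simp: covers_def strict_def)
    have "(w',k) \<in> R" using w'S mem rw by (simp add: R_mem)
    moreover have "leR (x,k) (w',k)" using lxw' B.refl mem rw by (simp add: leR_iff)
    ultimately show False using mx lxw' by auto
  qed
next
  assume mx: "\<forall>w\<in>S1. le1 x w \<longrightarrow> w = x"
  have mem: "x \<in> S1" "k \<in> S2" using xk by (auto simp: R_mem)
  show "\<forall>w\<in>R. leR (x,k) w \<longrightarrow> w = (x,k)"
  proof (intro ballI impI)
    fix w assume w: "w \<in> R" "leR (x,k) w"
    obtain p q where pq: "w = (p,q)" by (cases w)
    have pS: "p \<in> S1" "q \<in> S2" using w pq by (auto simp: R_mem)
    moreover have "le1 x p" using w pq by (auto simp: leR_iff)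
    ultimately have "p = x" using mx by auto
    then have "k = q" using leR_same_fst[of k q x] w pq mem pS by auto
    then show "w = (x,k)" using pq \<open>p = x\<close> by simp
  qed
qed

lemma R_empty: "R = {} \<longleftrightarrow> S1 = {}"
proof
  assume "R = {}"
  show "S1 = {}"
  proof (rule ccontr)
    assume "S1 \<noteq> {}" then obtain x where "x \<in> S1" by blast
    then have "(x, z2) \<in> R" using z2S r2z2 by (simp add: R_mem)
    then show False using \<open>R = {}\<close> by simp
  qed
next
  assume "S1 = {}" then show "R = {}" by (auto simp: rees_carrier_def)
qed

lemma covH:
  assumes a: "a \<in> H" and b: "b \<in> H"
  shows "covers H leH a b \<longleftrightarrow> covers H1 leH1 (pp1 a) (pp1 b) \<and>
           (b = HTop \<or> p2 a = p2 b \<or> covers S2 le2 (p2 a) (p2 b))"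
proof (cases a rule: hat_pair_cases)
  case 1 note aB = this
  show ?thesis
  proof (cases b rule: hat_pair_cases)
    case 1 then show ?thesis using aB by (simp add: cov_hat_xB)
  next
    case 2 then show ?thesis using aB by (simp add: cov_hat_BT R_empty)
  next
    case (3 y l)
    have yl: "(y,l) \<in> R" using b 3 by simp
    have mem: "y \<in> S1" "l \<in> S2" "r2 l \<le> r1 y" using yl by (auto simp: R_mem)
    have "(\<forall>w\<in>S1. le1 w y \<longrightarrow> w = y) \<Longrightarrow> l = z2"
    proof -
      assume "\<forall>w\<in>S1. le1 w y \<longrightarrow> w = y"
      then have "r1 y = 0" using A.rank_minimal mem by blast
      then show "l = z2" using r2_0 mem by simp
    qed
    then show ?thesis using aB 3 yl mem minR_iff[OF yl] by (auto simp: cov_hat_BM)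
  qed
next
  case 2 then show ?thesis by (simp add: cov_hat_Tx)
next
  case (3 x k) note aM = this
  have xk: "(x,k) \<in> R" using a 3 by simp
  show ?thesis
  proof (cases b rule: hat_pair_cases)
    case 1 then show ?thesis using aM by (simp add: cov_hat_xB)
  next
    case 2 then show ?thesis using aM xk maxR_iff[OF xk] by (simp add: cov_hat_MT R_mem)
  next
    case (3 y l)
    have yl: "(y,l) \<in> R" using b 3 by simp
    show ?thesis using aM 3 covR[OF xk yl] by (simp add: cov_hat_MM)
  qed
qed

lemma H_pp1: "a \<in> H \<Longrightarrow> pp1 a \<in> H1"
  by (cases a rule: hat_pair_cases) (auto simp: R_mem)

lemma H_pp2: "a \<in> H \<Longrightarrow> p2 a \<in> S2"
  by (cases a rule: hat_pair_cases) (auto simp: R_mem z2S)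

lemma path_decomp:
  assumes c: "cpath H leH D"
  shows "cpath H1 leH1 (map pp1 D)"
    and "\<And>i. Suc i < length D \<Longrightarrow> D!Suc i = HTop \<or> p2 (D!i) = p2 (D!Suc i) \<or> covers S2 le2 (p2 (D!i)) (p2 (D!Suc i))"
    and "\<And>i. Suc i < length D \<Longrightarrow> D!i \<noteq> HTop \<and> D!Suc i \<noteq> HBot"
proof -
  have inH: "\<And>i. i < length D \<Longrightarrow> D!i \<in> H" using c cpath_nth_in by blast
  have cv: "\<And>i. Suc i < length D \<Longrightarrow> covers H leH (D!i) (D!Suc i)" using c by (simp add: cpath_def)
  show "cpath H1 leH1 (map pp1 D)"
    unfolding cpath_def
  proof (intro conjI allI impI)
    show "map pp1 D \<noteq> []" using c by (simp add: cpath_def)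
    show "set (map pp1 D) \<subseteq> H1" using inH H_pp1 by (auto simp: in_set_conv_nth)
    fix i assume i: "Suc i < length (map pp1 D)"
    then show "covers H1 leH1 (map pp1 D ! i) (map pp1 D ! Suc i)"
      using covH[OF inH inH] cv by simp
  qed
  fix i assume i: "Suc i < length D"
  show "D!Suc i = HTop \<or> p2 (D!i) = p2 (D!Suc i) \<or> covers S2 le2 (p2 (D!i)) (p2 (D!Suc i))"
    using covH[OF inH inH] cv i by simp
  show "D!i \<noteq> HTop \<and> D!Suc i \<noteq> HBot" using cv[OF i] cov_hat_xB cov_hat_Tx by metis
qed

lemma path_build:
  assumes ne: "D \<noteq> []" and sub: "\<And>i. i < length D \<Longrightarrow> D!i \<in> H"
    and c1: "\<And>i. Suc i < length D \<Longrightarrow> covers H1 leH1 (pp1 (D!i)) (pp1 (D!Suc i))"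
    and c2: "\<And>i. Suc i < length D \<Longrightarrow> D!Suc i = HTop \<or> p2 (D!i) = p2 (D!Suc i) \<or> covers S2 le2 (p2 (D!i)) (p2 (D!Suc i))"
  shows "cpath H leH D"
  unfolding cpath_def
proof (intro conjI allI impI)
  show "D \<noteq> []" by fact
  show "set D \<subseteq> H" using sub by (auto simp: in_set_conv_nth)
  fix i assume i: "Suc i < length D"
  then show "covers H leH (D!i) (D!Suc i)" using covH[OF sub sub] c1 c2 by simp
qed

lemma EL1pair:
  assumes "a \<in> H1" "b \<in> H1" "strict leH1 a b" shows "ELpair H1 leH1 lam1 a b"
  using EL_D[OF poset_H1 EL1 assms] .

lemma EL2pair:
  assumes kS: "k \<in> S2" and lS: "l \<in> S2" and kl: "strict le2 k l" shows "ELpair S2 le2 lam2 k l"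
proof -
  obtain m where m: "is_maximal S2 le2 m" "le2 l m" using B.maximal_above lS by blast
  let ?T = "interval S2 le2 z2 m"
  have ELT: "EL_labeling ?T le2 lam2" using EL2 m unfolding semi_EL_labeling_def by blast
  have TS: "?T \<subseteq> S2" by (auto simp: interval_def)
  have mS: "m \<in> S2" using m by (simp add: is_maximal_def)
  have cv: "\<And>a b c. a \<in> ?T \<Longrightarrow> b \<in> ?T \<Longrightarrow> c \<in> S2 \<Longrightarrow> le2 a c \<Longrightarrow> le2 c b \<Longrightarrow> c \<in> ?T"
    unfolding interval_def using z2le B.trans mS by blast
  have kT: "k \<in> ?T" using kS lS mS z2le m kl B.trans[of k l m] by (auto simp: interval_def strict_def)
  have lT: "l \<in> ?T" using lS z2le m by (auto simp: interval_def)
  have PT: "poset_on ?T le2" using B.P TS unfolding poset_on_def by blast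
  have "ELpair ?T le2 lam2 k l" using EL_D[OF PT ELT kT lT kl] .
  moreover have "ELpair ?T le2 lam2 k l \<longleftrightarrow> ELpair S2 le2 lam2 k l"
    by (rule ELpair_convex[OF B.P TS _ kT lT]) (rule cv; assumption)
  ultimately show ?thesis by simp
qed

end



definition peq :: "'a list \<Rightarrow> 'a list \<Rightarrow> bool" where
  "peq X Y \<longleftrightarrow> (\<forall>j. j < length X \<longrightarrow> j < length Y \<longrightarrow> X!j = Y!j)"

lemma peq_take: "peq X Y \<Longrightarrow> i \<le> length X \<Longrightarrow> i \<le> length Y \<Longrightarrow> take i X = take i Y"
  unfolding peq_def by (intro nth_equalityI) auto

lemma peq_refl: "peq X X" by (simp add: peq_def)

lemma lex_zip2:
  assumes lAB: "length A = length B" and lAB': "length A' = length B'"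
    and a: "peq A A' \<or> lex_prec A A'" and b: "peq B B' \<or> lex_prec B B'"
    and s: "lex_prec A A' \<or> lex_prec B B'"
  shows "lex_prec (zip A B) (zip A' B')"
proof -
  have tk: "\<And>X Y i j. take j X = take j Y \<Longrightarrow> i < j \<Longrightarrow> X!i = Y!i"
    by (metis nth_take)
  have tk2: "\<And>X Y i j. take j X = take j Y \<Longrightarrow> i \<le> j \<Longrightarrow> take i X = take i Y"
    by (metis min.absorb1 take_take)
  show ?thesis
  proof (cases "lex_prec A A'")
    case True
    then obtain i1 where i1: "i1 < length A" "i1 < length A'" "take i1 A = take i1 A'" "A!i1 < A'!i1"
      unfolding lex_prec_def by blast
    show ?thesis
    proof (cases "lex_prec B B'")
      case False
      then have pB: "peq B B'" using b by simp
      have "take i1 B = take i1 B'" using peq_take[OF pB] i1 lAB lAB' by simp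
      moreover have "B!i1 = B'!i1" using pB i1 lAB lAB' unfolding peq_def by simp
      ultimately show ?thesis unfolding lex_prec_def
        using i1 lAB lAB' by (intro exI[of _ i1]) (auto simp: take_zip intro!: prod_less1)
    next
      case True
      then obtain i2 where i2: "i2 < length B" "i2 < length B'" "take i2 B = take i2 B'" "B!i2 < B'!i2"
        unfolding lex_prec_def by blast
      define i where "i = min i1 i2"
      have ti: "take i A = take i A'" "take i B = take i B'"
        using tk2[OF i1(3), of i] tk2[OF i2(3), of i] unfolding i_def by auto
      have "(A!i, B!i) < (A'!i, B'!i)"
      proof (cases "i1 \<le> i2")
        case True
        then have "i = i1" by (simp add: i_def)
        moreover have "B!i \<le> B'!i" using i2 tk[of i2 B B' i] True \<open>i = i1\<close>
          by (cases "i1 = i2") (auto simp: less_imp_le)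
        ultimately show ?thesis using i1 by (intro prod_less1) auto
      next
        case False
        then have "i = i2" by (simp add: i_def)
        moreover have "A!i = A'!i" using i1 tk[of i1 A A' i] False \<open>i = i2\<close> by simp
        ultimately show ?thesis using i2 by (intro prod_less2) auto
      qed
      then show ?thesis unfolding lex_prec_def using ti i1 i2 lAB lAB' unfolding i_def
        by (intro exI[of _ "min i1 i2"]) (auto simp: take_zip)
    qed
  next
    case False
    then have pA: "peq A A'" using a by simp
    obtain i2 where i2: "i2 < length B" "i2 < length B'" "take i2 B = take i2 B'" "B!i2 < B'!i2"
      using s False unfolding lex_prec_def by blast
    have "take i2 A = take i2 A'" using peq_take[OF pA] i2 lAB lAB' by simp
    moreover have "A!i2 = A'!i2" using pA i2 lAB lAB' unfolding peq_def by simp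
    ultimately show ?thesis unfolding lex_prec_def
      using i2 lAB lAB' by (intro exI[of _ i2]) (auto simp: take_zip intro!: prod_less2)
  qed
qed

definition lazy :: "'a set \<Rightarrow> ('a \<Rightarrow> 'a \<Rightarrow> bool) \<Rightarrow> 'a list \<Rightarrow> bool" where
  "lazy S le ps \<longleftrightarrow> (\<forall>i. Suc i < length ps \<longrightarrow> ps!i = ps!Suc i \<or> covers S le (ps!i) (ps!Suc i))"

context spposet begin

lemma lazy_rank:
  assumes lz: "lazy S le ps" and ij: "i \<le> j"
  shows "j < length ps \<Longrightarrow> r (ps!i) \<le> r (ps!j) \<and> r (ps!j) \<le> r (ps!i) + (j - i) \<and>
     ((\<exists>t. i \<le> t \<and> t < j \<and> ps!t = ps!Suc t) \<longrightarrow> r (ps!j) + 1 \<le> r (ps!i) + (j - i)) \<and>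
     ((\<forall>t. i \<le> t \<longrightarrow> t < j \<longrightarrow> ps!t \<noteq> ps!Suc t) \<longrightarrow> r (ps!j) = r (ps!i) + (j - i))"
  using ij
proof (induction j)
  case 0 then show ?case by auto
next
  case (Suc j)
  show ?case
  proof (cases "i = Suc j")
    case True then show ?thesis by auto
  next
    case False
    then have ij': "i \<le> j" using Suc.prems by simp
    have IH: "r (ps!i) \<le> r (ps!j) \<and> r (ps!j) \<le> r (ps!i) + (j - i) \<and>
     ((\<exists>t. i \<le> t \<and> t < j \<and> ps!t = ps!Suc t) \<longrightarrow> r (ps!j) + 1 \<le> r (ps!i) + (j - i)) \<and>
     ((\<forall>t. i \<le> t \<longrightarrow> t < j \<longrightarrow> ps!t \<noteq> ps!Suc t) \<longrightarrow> r (ps!j) = r (ps!i) + (j - i))"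
      using Suc.IH[OF _ ij'] Suc.prems by simp
    have st: "ps!j = ps!Suc j \<or> covers S le (ps!j) (ps!Suc j)" using lz Suc.prems unfolding lazy_def by blast
    then show ?thesis
    proof
      assume eq: "ps!j = ps!Suc j"
      have "\<exists>t. i \<le> t \<and> t < Suc j \<and> ps!t = ps!Suc t" using eq ij' by blast
      moreover have "\<not> (\<forall>t. i \<le> t \<longrightarrow> t < Suc j \<longrightarrow> ps!t \<noteq> ps!Suc t)" using eq ij' by blast
      ultimately show ?thesis using IH eq ij' by (simp add: Suc_diff_le)
    next
      assume cv: "covers S le (ps!j) (ps!Suc j)"
      then have rr: "r (ps!Suc j) = Suc (r (ps!j))" using rank_cover by blast
      have ne: "ps!j \<noteq> ps!Suc j" using cv by (auto simp: covers_def strict_def)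
      have e1: "(\<exists>t. i \<le> t \<and> t < Suc j \<and> ps!t = ps!Suc t) \<longleftrightarrow> (\<exists>t. i \<le> t \<and> t < j \<and> ps!t = ps!Suc t)"
        using ne less_Suc_eq by auto
      have e2: "(\<forall>t. i \<le> t \<longrightarrow> t < Suc j \<longrightarrow> ps!t \<noteq> ps!Suc t) \<longleftrightarrow> (\<forall>t. i \<le> t \<longrightarrow> t < j \<longrightarrow> ps!t \<noteq> ps!Suc t)"
        using ne less_Suc_eq by auto
      show ?thesis unfolding e1 e2 using IH rr ij' by (simp add: Suc_diff_le)
    qed
  qed
qed

end

fun rho :: "('a \<Rightarrow> nat) \<Rightarrow> 'a hat \<Rightarrow> nat" where
  "rho f HBot = 0" | "rho f (Mid x) = Suc (f x)" | "rho f HTop = 0"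

context rees begin

lemma rho_cov:
  assumes cv: "covers H1 leH1 a b" and bT: "b \<noteq> HTop"
  shows "rho r1 b = Suc (rho r1 a)"
proof (cases a)
  case HBot
  then obtain y where y: "b = Mid y" using cv bT cov_hat_xB by (cases b) auto
  then have "y \<in> S1" "\<forall>w\<in>S1. le1 w y \<longrightarrow> w = y" using cv HBot by (auto simp: cov_hat_BM)
  then have "r1 y = 0" using A.rank_minimal by blast
  then show ?thesis using HBot y by simp
next
  case (Mid x)
  then obtain y where y: "b = Mid y" using cv bT cov_hat_xB by (cases b) auto
  then have "covers S1 le1 x y" using cv Mid by (simp add: cov_hat_MM)
  then show ?thesis using A.rank_cover Mid y by simp
next
  case HTop then show ?thesis using cv cov_hat_Tx by blast
qed

lemma rho_path:
  assumes c: "cpath H1 leH1 X" and nT: "\<And>i. i < length X \<Longrightarrow> X!i \<noteq> HTop"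
  shows "i < length X \<Longrightarrow> rho r1 (X!i) = rho r1 (X!0) + i"
proof (induction i)
  case 0 then show ?case by simp
next
  case (Suc i)
  then have "covers H1 leH1 (X!i) (X!Suc i)" using c by (simp add: cpath_def)
  then show ?case using rho_cov nT Suc by simp
qed

lemma K_exists:
  assumes kS: "k \<in> S2" and lS: "l \<in> S2" and kl: "le2 k l"
  shows "\<exists>K. cp S2 le2 k l K \<and> weakly_increasing lam2 K \<and>
     (\<forall>K'. cp S2 le2 k l K' \<and> weakly_increasing lam2 K' \<longrightarrow> K' = K) \<and>
     (\<forall>K'. cp S2 le2 k l K' \<and> K' \<noteq> K \<longrightarrow> lex_prec (label_seq lam2 K) (label_seq lam2 K'))"
proof (cases "k = l")
  case True
  have c: "cp S2 le2 k l [k]" using True kS by (simp add: cp_def cpath_def)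
  have u: "\<And>K'. cp S2 le2 k l K' \<Longrightarrow> K' = [k]"
  proof -
    fix K' assume K': "cp S2 le2 k l K'"
    have "length K' = Suc 0" using B.cp_length(1)[OF K'] True by simp
    moreover have "K'!0 = k" using cp_ends[OF K'] by simp
    ultimately show "K' = [k]" by (metis length_0_conv length_Suc_conv nth_Cons_0)
  qed
  have wi: "weakly_increasing lam2 [k]" by (simp add: weakly_increasing_def)
  show ?thesis using c wi u by blast
next
  case False
  then have skl: "strict le2 k l" using kl by (simp add: strict_def)
  have E: "ELpair S2 le2 lam2 k l" using EL2pair[OF kS lS skl] .
  then obtain K where K: "cp S2 le2 k l K" "weakly_increasing lam2 K"
    and Ku: "\<And>K'. cp S2 le2 k l K' \<Longrightarrow> weakly_increasing lam2 K' \<Longrightarrow> K' = K"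
    unfolding ELpair_def by blast
  have "\<And>K'. cp S2 le2 k l K' \<Longrightarrow> K' \<noteq> K \<Longrightarrow> lex_prec (label_seq lam2 K) (label_seq lam2 K')"
    using E K unfolding ELpair_def by blast
  then show ?thesis using K Ku by blast
qed

end



context rees begin

abbreviation "lab \<equiv> rees_label lam1 lam2 z2"

lemma cpath_notTop:
  assumes c: "cpath S le X" and "\<And>a. \<not> covers S le HTop a" and "Suc i < length X"
  shows "X!i \<noteq> HTop"
  using assms unfolding cpath_def by metis

lemma hd_map': "D \<noteq> [] \<Longrightarrow> hd (map f D) = f (hd D)" by (simp add: hd_map)

lemma Hpath_ends_len:
  assumes c: "cp H leH u v D" and uv: "u \<noteq> v"
  shows "Suc 0 < length D"
proof -
  have "D \<noteq> []" "D!0 = u" "D!(length D - 1) = v" using cp_ends[OF c] by auto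
  then show ?thesis using uv by (cases D) auto
qed

lemma top_case:
  assumes uH: "u \<in> H" and su: "strict leH u HTop"
  shows "ELpair H leH lab u HTop"
proof -
  define a0 where "a0 = pp1 u"
  define k where "k = p2 u"
  have uT: "u \<noteq> HTop" using su by (simp add: strict_def)
  have a0H: "a0 \<in> H1" using H_pp1 uH a0_def by simp
  have a0T: "a0 \<noteq> HTop" using uT a0_def by (cases u rule: hat_pair_cases) auto
  have kS: "k \<in> S2" using H_pp2 uH k_def by simp
  have sa: "strict leH1 a0 HTop" using a0T by (simp add: strict_def)
  have E1: "ELpair H1 leH1 lam1 a0 HTop" using EL1pair[OF a0H _ sa] by simp
  have E1': "\<exists>!xs. cp H1 leH1 a0 HTop xs \<and> weakly_increasing lam1 xs"
    and E1l: "\<forall>xs ys. cp H1 leH1 a0 HTop xs \<and> weakly_increasing lam1 xs \<and> cp H1 leH1 a0 HTop ys \<and> ys \<noteq> xs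
        \<longrightarrow> lex_prec (label_seq lam1 xs) (label_seq lam1 ys)"
    using E1 unfolding ELpair_def by auto
  obtain C1 where C1: "cp H1 leH1 a0 HTop C1" "weakly_increasing lam1 C1"
    and C1u: "\<And>X. cp H1 leH1 a0 HTop X \<Longrightarrow> weakly_increasing lam1 X \<Longrightarrow> X = C1"
    using E1' by blast
  have C1l: "\<And>X. cp H1 leH1 a0 HTop X \<Longrightarrow> X \<noteq> C1 \<Longrightarrow> lex_prec (label_seq lam1 C1) (label_seq lam1 X)"
    using E1l C1 by blast
  have ua0: "a0 = HBot \<Longrightarrow> u = HBot" using a0_def by (cases u rule: hat_pair_cases) auto
  have C1ne: "C1 \<noteq> []" and C10: "C1!0 = a0" and C1n: "C1!(length C1 - 1) = HTop"
    using cp_ends[OF C1(1)] by auto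
  have C1c: "cpath H1 leH1 C1" using C1(1) by (simp add: cp_def)
  have C1le: "\<And>i. i < length C1 \<Longrightarrow> leH1 a0 (C1!i)"
    using cpath_le_nth[OF poset_H1 C1c, of 0] C10 by auto
  have C1in: "\<And>i. i < length C1 \<Longrightarrow> C1!i \<in> H1" using cpath_nth_in[OF C1c] by blast
  have C1B: "\<And>i. i < length C1 \<Longrightarrow> C1!i = HBot \<Longrightarrow> i = 0"
  proof (rule ccontr)
    fix i assume i: "i < length C1" "C1!i = HBot" "i \<noteq> 0"
    then have "strict leH1 (C1!0) (C1!i)" using cpath_strict_nth[OF poset_H1 C1c, of 0 i] by simp
    then show False using i by (simp add: strict_def hat_le_HBot)
  qed
  have C1T: "\<And>i. Suc i < length C1 \<Longrightarrow> C1!i \<noteq> HTop"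
    using cpath_notTop[OF C1c] cov_hat_Tx by blast
  define C where "C = map (\<lambda>a. mk a k) C1"
  have lenC: "length C = length C1" by (simp add: C_def)
  have Cnth: "\<And>i. i < length C1 \<Longrightarrow> C!i = mk (C1!i) k" by (simp add: C_def)
  have pC: "map pp1 C = C1" by (simp add: C_def comp_def)
  have Cp2: "\<And>i. i < length C1 \<Longrightarrow> C1!i \<noteq> HTop \<Longrightarrow> p2 (C!i) = k"
  proof -
    fix i assume i: "i < length C1" "C1!i \<noteq> HTop"
    show "p2 (C!i) = k"
    proof (cases "C1!i")
      case HBot then have "i = 0" using C1B i by simp
      then have "u = HBot" using ua0 C10 HBot by simp
      then show ?thesis using Cnth i HBot by (simp add: k_def)
    next
      case (Mid x) then show ?thesis using Cnth i by simp
    next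
      case HTop then show ?thesis using i by simp
    qed
  qed
  have CinH: "\<And>i. i < length C1 \<Longrightarrow> C!i \<in> H"
  proof -
    fix i assume i: "i < length C1"
    show "C!i \<in> H"
    proof (cases "C1!i")
      case HBot then show ?thesis using Cnth i by simp
    next
      case HTop then show ?thesis using Cnth i by simp
    next
      case (Mid x)
      have xS: "x \<in> S1" using C1in[OF i] Mid by simp
      have "r2 k \<le> r1 x"
      proof (cases u rule: hat_pair_cases)
        case 1 then show ?thesis using r2z2 by (simp add: k_def)
      next
        case 2 then show ?thesis using uT by simp
      next
        case (3 x0 k0)
        then have "(x0,k0) \<in> R" using uH by simp
        then have "x0 \<in> S1" "r2 k0 \<le> r1 x0" by (auto simp: R_mem)
        moreover have "le1 x0 x" using C1le[OF i] Mid 3 by (simp add: a0_def)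
        ultimately show ?thesis using A.rank_mono[of x0 x] xS 3 by (simp add: k_def)
      qed
      then show ?thesis using Cnth i Mid xS kS by (simp add: R_mem)
    qed
  qed
  have Cstep: "\<And>i. Suc i < length C \<Longrightarrow> C!Suc i = HTop \<or> p2 (C!i) = p2 (C!Suc i)"
  proof -
    fix i assume i: "Suc i < length C"
    show "C!Suc i = HTop \<or> p2 (C!i) = p2 (C!Suc i)"
    proof (cases "C1!Suc i = HTop")
      case True then show ?thesis using Cnth i lenC by simp
    next
      case False then show ?thesis using Cp2 C1T i lenC by simp
    qed
  qed
  have Cc: "cpath H leH C"
  proof (rule path_build)
    show "C \<noteq> []" using C1ne by (simp add: C_def)
    show "\<And>i. i < length C \<Longrightarrow> C!i \<in> H" using CinH lenC by simp
    show "\<And>i. Suc i < length C \<Longrightarrow> covers H1 leH1 (pp1 (C!i)) (pp1 (C!Suc i))"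
      using C1c lenC Cnth by (simp add: cpath_def)
    show "\<And>i. Suc i < length C \<Longrightarrow> C!Suc i = HTop \<or> p2 (C!i) = p2 (C!Suc i) \<or> covers S2 le2 (p2 (C!i)) (p2 (C!Suc i))"
      using Cstep by blast
  qed
  have C0: "C!0 = u" using Cnth[of 0] C1ne C10 mk_pp[of u z2] by (simp add: a0_def k_def)
  have Cn: "C!(length C - 1) = HTop" using Cnth[of "length C1 - 1"] C1ne C1n lenC by simp
  have Cne: "C \<noteq> []" using C1ne by (simp add: C_def)
  have Cpath: "cp H leH u HTop C"
    using Cc C0 Cn Cne by (simp add: cp_def hd_conv_nth last_conv_nth)
  have Dfacts: "\<And>D. cp H leH u HTop D \<Longrightarrow> cp H1 leH1 a0 HTop (map pp1 D) \<and>
      label_seq lab D = zip (label_seq lam1 (map pp1 D)) (label_seq (sec lam2 z2) D)"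
  proof -
    fix D assume D: "cp H leH u HTop D"
    have Dc: "cpath H leH D" and hD: "hd D = u" and lD: "last D = HTop" and Dne: "D \<noteq> []"
      using D cp_ends[OF D] by (auto simp: cp_def)
    have h1: "hd (map pp1 D) = a0" using hD Dne by (simp add: hd_map a0_def)
    have h2: "last (map pp1 D) = HTop" using lD Dne by (simp add: last_map)
    have "cp H1 leH1 a0 HTop (map pp1 D)"
      unfolding cp_def by (intro conjI path_decomp(1)[OF Dc] h1 h2)
    moreover have "label_seq lab D = zip (label_seq lam1 (map pp1 D)) (label_seq (sec lam2 z2) D)"
      by (rule label_seq_rees) (use path_decomp(3)[OF Dc] in blast)
    ultimately show "?thesis D" by (rule conjI)
  qed
  have Dnone: "\<And>D. cp H leH u HTop D \<Longrightarrow> (\<forall>i < length D - 1. label_seq (sec lam2 z2) D ! i = None)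
      \<Longrightarrow> D = map (\<lambda>a. mk a k) (map pp1 D)"
  proof -
    fix D assume D: "cp H leH u HTop D" and N: "\<forall>i < length D - 1. label_seq (sec lam2 z2) D ! i = None"
    have Dc: "cpath H leH D" using D by (simp add: cp_def)
    have D0: "D!0 = u" using cp_ends[OF D] by simp
    have p2k: "\<And>i. i < length D \<Longrightarrow> D!i \<noteq> HTop \<Longrightarrow> p2 (D!i) = k"
    proof -
      fix i show "i < length D \<Longrightarrow> D!i \<noteq> HTop \<Longrightarrow> p2 (D!i) = k"
      proof (induction i)
        case 0 then show ?case using D0 by (simp add: k_def)
      next
        case (Suc i)
        have "label_seq (sec lam2 z2) D ! i = None" using N Suc.prems by simp
        then have "sec lam2 z2 (D!i) (D!Suc i) = None" using Suc.prems by (simp add: label_seq_nth)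
        then have "p2 (D!i) = p2 (D!Suc i)" using Suc.prems by (simp add: sec_def sec2_def split: if_splits)
        moreover have "D!i \<noteq> HTop" using path_decomp(3)[OF Dc] Suc.prems by blast
        ultimately show ?case using Suc by simp
      qed
    qed
    show "D = map (\<lambda>a. mk a k) (map pp1 D)"
    proof (rule nth_equalityI)
      show "length D = length (map (\<lambda>a. mk a k) (map pp1 D))" by simp
      fix i assume i: "i < length D"
      show "D!i = map (\<lambda>a. mk a k) (map pp1 D) ! i"
      proof (cases "D!i = HTop")
        case True then show ?thesis using i by simp
      next
        case False then show ?thesis using i p2k[OF i False] mk_pp[of "D!i" z2] by simp
      qed
    qed
  qed
  have SCnone: "\<And>i. i < length C - 1 \<Longrightarrow> label_seq (sec lam2 z2) C ! i = None"
  proof -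
    fix i assume i: "i < length C - 1"
    then have "Suc i < length C" by simp
    then show "label_seq (sec lam2 z2) C ! i = None"
      using Cstep[of i] by (auto simp: label_seq_nth sec_def sec2_def)
  qed
  have Cwi: "weakly_increasing lab C"
  proof -
    have "label_seq lab C = zip (label_seq lam1 C1) (label_seq (sec lam2 z2) C)"
      using Dfacts[OF Cpath] pC by simp
    moreover have "winc (label_seq lam1 C1)" using C1(2) wi_winc by blast
    moreover have "winc (label_seq (sec lam2 z2) C)" using SCnone unfolding winc_def by simp
    ultimately show ?thesis using lenC by (simp add: wi_winc winc_zip)
  qed
  have uniq: "\<And>D. cp H leH u HTop D \<Longrightarrow> weakly_increasing lab D \<Longrightarrow> D = C"
  proof -
    fix D assume D: "cp H leH u HTop D" and wD: "weakly_increasing lab D"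
    obtain P1 L where P1: "cp H1 leH1 a0 HTop (map pp1 D)" and L: "label_seq lab D = zip (label_seq lam1 (map pp1 D)) (label_seq (sec lam2 z2) D)"
      using Dfacts[OF D] by blast
    have w: "winc (label_seq lam1 (map pp1 D))" "winc (label_seq (sec lam2 z2) D)"
      using wD L by (simp_all add: wi_winc winc_zip)
    have l2: "Suc 0 < length D" using Hpath_ends_len[OF D uT] .
    have Dn: "D!(length D - 1) = HTop" using cp_ends[OF D] by simp
    have last0: "label_seq (sec lam2 z2) D ! (length D - 2) = None"
      using l2 Dn by (simp add: label_seq_nth sec_def) (metis Suc_diff_Suc diff_Suc_1 numeral_2_eq_2)
    have "\<forall>i < length D - 1. label_seq (sec lam2 z2) D ! i = None"
    proof (intro allI impI)
      fix i assume i: "i < length D - 1"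
      have "label_seq (sec lam2 z2) D ! i \<le> label_seq (sec lam2 z2) D ! (length D - 2)"
        using winc_le[OF w(2), of i "length D - 2"] i l2 by simp
      then show "label_seq (sec lam2 z2) D ! i = None" using last0 less_eq_option_None_is_None by simp
    qed
    then have D1: "D = map (\<lambda>a. mk a k) (map pp1 D)" using Dnone[OF D] by blast
    have "map pp1 D = C1" using C1u[OF P1] w(1) wi_winc by blast
    then show "D = C" using D1 by (simp add: C_def)
  qed
  have lexC: "\<And>D. cp H leH u HTop D \<Longrightarrow> D \<noteq> C \<Longrightarrow> lex_prec (label_seq lab C) (label_seq lab D)"
  proof -
    fix D assume D: "cp H leH u HTop D" and DC: "D \<noteq> C"
    obtain P1 L where P1: "cp H1 leH1 a0 HTop (map pp1 D)" and L: "label_seq lab D = zip (label_seq lam1 (map pp1 D)) (label_seq (sec lam2 z2) D)"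
      using Dfacts[OF D] by blast
    have LC: "label_seq lab C = zip (label_seq lam1 C1) (label_seq (sec lam2 z2) C)"
      using Dfacts[OF Cpath] pC by simp
    let ?SC = "label_seq (sec lam2 z2) C" and ?SD = "label_seq (sec lam2 z2) D"
    have a: "peq (label_seq lam1 C1) (label_seq lam1 (map pp1 D)) \<or> lex_prec (label_seq lam1 C1) (label_seq lam1 (map pp1 D))"
      using C1l[OF P1] peq_refl by (cases "map pp1 D = C1") auto
    have b: "peq ?SC ?SD \<or> lex_prec ?SC ?SD"
    proof (cases "\<exists>j. j < length ?SC \<and> j < length ?SD \<and> ?SD!j \<noteq> None")
      case True
      define j where "j = (LEAST j. j < length ?SC \<and> j < length ?SD \<and> ?SD!j \<noteq> None)"
      have j: "j < length ?SC" "j < length ?SD" "?SD!j \<noteq> None"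
        using LeastI_ex[OF True] unfolding j_def by blast+
      have jm: "\<And>i. i < j \<Longrightarrow> ?SD!i = None"
      proof -
        fix i assume i: "i < j"
        then have "\<not> (i < length ?SC \<and> i < length ?SD \<and> ?SD!i \<noteq> None)"
          unfolding j_def by (rule not_less_Least)
        then show "?SD!i = None" using i j by simp
      qed
      have "lex_prec ?SC ?SD"
      proof (rule lex_firstI[OF j(1) j(2)])
        show "\<And>i. i < j \<Longrightarrow> ?SC!i = ?SD!i" using jm SCnone j by simp
        show "?SC!j < ?SD!j" using SCnone[of j] j by (cases "?SD!j") auto
      qed
      then show ?thesis by blast
    next
      case False
      then show ?thesis using SCnone unfolding peq_def by auto
    qed
    have s: "lex_prec (label_seq lam1 C1) (label_seq lam1 (map pp1 D)) \<or> lex_prec ?SC ?SD"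
    proof (rule ccontr)
      assume n: "\<not> ?thesis"
      then have pD: "map pp1 D = C1" using C1l[OF P1] by blast
      then have lD: "length D = length C" using lenC by (metis length_map)
      have "peq ?SC ?SD" using b n by blast
      then have "\<forall>i < length D - 1. ?SD ! i = None" using SCnone lD unfolding peq_def by simp
      then have "D = map (\<lambda>a. mk a k) (map pp1 D)" using Dnone[OF D] by blast
      then show False using pD DC by (simp add: C_def)
    qed
    show "lex_prec (label_seq lab C) (label_seq lab D)"
      unfolding L LC by (rule lex_zip2[OF _ _ a b s]) (simp_all add: lenC)
  qed
  show ?thesis unfolding ELpair_def
  proof (intro conjI allI impI)
    show "\<exists>!xs. cp H leH u HTop xs \<and> weakly_increasing lab xs" using Cpath Cwi uniq by blast
    fix xs ys assume h: "cp H leH u HTop xs \<and> weakly_increasing lab xs \<and> cp H leH u HTop ys \<and> ys \<noteq> xs"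
    then have "xs = C" using uniq by blast
    then show "lex_prec (label_seq lab xs) (label_seq lab ys)" using lexC h by blast
  qed
qed

end



lemma winc_suffix: "winc (X @ Y) \<Longrightarrow> winc Y"
  unfolding winc_def
proof (intro allI impI)
  fix i assume A: "\<forall>i. Suc i < length (X @ Y) \<longrightarrow> (X @ Y) ! i \<le> (X @ Y) ! Suc i" and i: "Suc i < length Y"
  have "Suc (length X + i) < length (X @ Y)" using i by simp
  then have "(X @ Y) ! (length X + i) \<le> (X @ Y) ! Suc (length X + i)" using A by blast
  moreover have "(X @ Y) ! Suc (length X + i) = Y ! Suc i" by (metis add_Suc_right nth_append_length_plus)
  moreover have "(X @ Y) ! (length X + i) = Y ! i" by simp
  ultimately show "Y!i \<le> Y!Suc i" by simp
qed

context rees begin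

lemma mid_case:
  assumes uH: "u \<in> H" and vH: "v \<in> H" and suv: "strict leH u v" and vT: "v \<noteq> HTop"
  shows "ELpair H leH lab u v"
proof -
  have vB: "v \<noteq> HBot" using suv by (auto simp: strict_def hat_le_HBot)
  obtain y l where v: "v = Mid (y,l)" using vT vB by (cases v rule: hat_pair_cases) auto
  have yl: "(y,l) \<in> R" using vH v by simp
  have ymem: "y \<in> S1" "l \<in> S2" "r2 l \<le> r1 y" using yl by (auto simp: R_mem)
  have uT: "u \<noteq> HTop" using suv v by (auto simp: strict_def hat_le_HTop)
  define a0 where "a0 = pp1 u"
  define k where "k = p2 u"
  have a0H: "a0 \<in> H1" using H_pp1 uH a0_def by simp
  have kS: "k \<in> S2" using H_pp2 uH k_def by simp
  have ua0: "a0 = HBot \<Longrightarrow> u = HBot" using a0_def by (cases u rule: hat_pair_cases) auto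
  have u_cases: "(u = HBot \<and> a0 = HBot \<and> k = z2) \<or> (\<exists>x. u = Mid (x,k) \<and> a0 = Mid x \<and> (x,k) \<in> R \<and> strict le1 x y)"
  proof (cases u rule: hat_pair_cases)
    case 1 then show ?thesis by (simp add: a0_def k_def)
  next
    case 2 then show ?thesis using uT by simp
  next
    case (3 x k0)
    have xk: "(x,k0) \<in> R" using uH 3 by simp
    have le: "leR (x,k0) (y,l)" and ne: "(x,k0) \<noteq> (y,l)" using suv 3 v by (auto simp: strict_def)
    have "x \<noteq> y"
    proof
      assume "x = y"
      then have "k0 = l" using leR_same_fst[of k0 l x] le xk ymem by (auto simp: R_mem)
      then show False using ne \<open>x = y\<close> by simp
    qed
    then have "strict le1 x y" using le by (simp add: leR_iff strict_def)
    then show ?thesis using 3 xk by (simp add: a0_def k_def)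
  qed
  have kl: "le2 k l" using u_cases z2le ymem suv v by (auto simp: strict_def leR_iff)
  have rkl: "r2 k \<le> r2 l" using B.rank_mono[OF kS ymem(2) kl] .
  have a0y: "strict leH1 a0 (Mid y)" using u_cases by (auto simp: strict_def)
  define n where "n = rho r1 (Mid y) - rho r1 a0"
  define m where "m = r2 l - r2 k"
  have rho_lt: "rho r1 a0 < rho r1 (Mid y)"
    using u_cases A.rank_strict ymem by (auto simp: R_mem)
  have mn: "m \<le> n" and slack: "u = HBot \<Longrightarrow> m < n"
  proof -
    show "m \<le> n"
    proof (cases "u = HBot")
      case True then show ?thesis using u_cases ymem r2z2 by (auto simp: m_def n_def)
    next
      case False
      then obtain x where x: "u = Mid (x,k)" "a0 = Mid x" "(x,k) \<in> R" using u_cases by blast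
      have "leR (x,k) (y,l)" using suv x v by (simp add: strict_def)
      then have "int (r2 l) - int (r2 k) \<le> int (r1 y) - int (r1 x)" by (simp add: leR_iff)
      then show ?thesis using x rkl by (simp add: m_def n_def)
    qed
    show "u = HBot \<Longrightarrow> m < n" using u_cases ymem r2z2 by (auto simp: m_def n_def)
  qed
  have lm: "r2 l = r2 k + m" using rkl by (simp add: m_def)
  have X_facts: "\<And>X. cp H1 leH1 a0 (Mid y) X \<Longrightarrow> length X = Suc n \<and>
      (\<forall>i < length X. X!i \<noteq> HTop \<and> rho r1 (X!i) = rho r1 a0 + i \<and> (0 < i \<longrightarrow> X!i \<noteq> HBot))"
  proof -
    fix X assume X: "cp H1 leH1 a0 (Mid y) X"
    have Xc: "cpath H1 leH1 X" using X by (simp add: cp_def)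
    have X0: "X!0 = a0" and Xn: "X!(length X - 1) = Mid y" and Xne: "X \<noteq> []" using cp_ends[OF X] by auto
    have nT: "\<And>i. i < length X \<Longrightarrow> X!i \<noteq> HTop"
    proof -
      fix i assume i: "i < length X"
      have "leH1 (X!i) (X!(length X - 1))" using cpath_le_nth[OF poset_H1 Xc, of i "length X - 1"] i by simp
      then show "X!i \<noteq> HTop" using Xn by (auto simp: hat_le_HTop)
    qed
    have rr: "\<And>i. i < length X \<Longrightarrow> rho r1 (X!i) = rho r1 a0 + i" using rho_path[OF Xc nT] X0 by simp
    have "rho r1 (Mid y) = rho r1 a0 + (length X - 1)" using rr[of "length X - 1"] Xne Xn by simp
    then have lX: "length X = Suc n" using Xne by (simp add: n_def)
    have nB: "\<And>i. i < length X \<Longrightarrow> 0 < i \<Longrightarrow> X!i \<noteq> HBot"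
    proof
      fix i assume i: "i < length X" "0 < i" "X!i = HBot"
      then have "strict leH1 (X!0) (X!i)" using cpath_strict_nth[OF poset_H1 Xc, of 0 i] by simp
      then show False using i by (simp add: strict_def hat_le_HBot)
    qed
    show "length X = Suc n \<and> (\<forall>i < length X. X!i \<noteq> HTop \<and> rho r1 (X!i) = rho r1 a0 + i \<and> (0 < i \<longrightarrow> X!i \<noteq> HBot))"
      using lX nT rr nB by blast
  qed
  have E1: "ELpair H1 leH1 lam1 a0 (Mid y)" using EL1pair[OF a0H _ a0y] ymem by simp
  have E1': "\<exists>!xs. cp H1 leH1 a0 (Mid y) xs \<and> weakly_increasing lam1 xs"
    and E1l: "\<forall>xs ys. cp H1 leH1 a0 (Mid y) xs \<and> weakly_increasing lam1 xs \<and> cp H1 leH1 a0 (Mid y) ys \<and> ys \<noteq> xs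
        \<longrightarrow> lex_prec (label_seq lam1 xs) (label_seq lam1 ys)"
    using E1 unfolding ELpair_def by auto
  obtain C1 where C1: "cp H1 leH1 a0 (Mid y) C1" "weakly_increasing lam1 C1"
    and C1u: "\<And>X. cp H1 leH1 a0 (Mid y) X \<Longrightarrow> weakly_increasing lam1 X \<Longrightarrow> X = C1"
    using E1' by blast
  have C1l: "\<And>X. cp H1 leH1 a0 (Mid y) X \<Longrightarrow> X \<noteq> C1 \<Longrightarrow> lex_prec (label_seq lam1 C1) (label_seq lam1 X)"
    using E1l C1 by blast
  have C1f: "length C1 = Suc n" "\<And>i. i < Suc n \<Longrightarrow> C1!i \<noteq> HTop \<and> rho r1 (C1!i) = rho r1 a0 + i \<and> (0 < i \<longrightarrow> C1!i \<noteq> HBot)"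
    using X_facts[OF C1(1)] by auto
  have C1c: "cpath H1 leH1 C1" using C1(1) by (simp add: cp_def)
  have C10: "C1!0 = a0" and C1n: "C1!n = Mid y" using cp_ends[OF C1(1)] C1f by auto
  have C1in: "\<And>i. i < Suc n \<Longrightarrow> C1!i \<in> H1" using cpath_nth_in[OF C1c] C1f by auto
  obtain K where K: "cp S2 le2 k l K" "weakly_increasing lam2 K"
    and Ku: "\<And>K'. cp S2 le2 k l K' \<Longrightarrow> weakly_increasing lam2 K' \<Longrightarrow> K' = K"
    and Kl: "\<And>K'. cp S2 le2 k l K' \<Longrightarrow> K' \<noteq> K \<Longrightarrow> lex_prec (label_seq lam2 K) (label_seq lam2 K')"
    using K_exists[OF kS ymem(2) kl] by blast
  have Kc: "cpath S2 le2 K" using K(1) by (simp add: cp_def)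
  have lK: "length K = Suc m" using B.cp_length(1)[OF K(1)] by (simp add: m_def)
  have K0: "K!0 = k" and Km: "K!m = l" and Kne: "K \<noteq> []" using cp_ends[OF K(1)] lK by auto
  have Kr: "\<And>j. j < Suc m \<Longrightarrow> r2 (K!j) = r2 k + j" using B.cpath_rank[OF Kc] lK K0 by simp
  have Kin: "\<And>j. j < Suc m \<Longrightarrow> K!j \<in> S2" using cpath_nth_in[OF Kc] lK by simp
  have Kcov: "\<And>j. Suc j < Suc m \<Longrightarrow> covers S2 le2 (K!j) (K!Suc j)" using Kc lK by (simp add: cpath_def)
  define Q where "Q = replicate (n - m) k @ K"
  have lQ: "length Q = Suc n" using lK mn by (simp add: Q_def)
  have Qnth: "\<And>i. Q!i = (if i < n - m then k else K!(i - (n - m)))" by (simp add: Q_def nth_append)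
  have Qk: "\<And>i. i \<le> n - m \<Longrightarrow> Q!i = k"
  proof -
    fix i assume i: "i \<le> n - m"
    show "Q!i = k" using Qnth[of i] K0 i by (cases "i < n - m") auto
  qed
  have Qin: "\<And>i. i < Suc n \<Longrightarrow> Q!i \<in> S2" using Qnth Kin kS mn by auto
  have Qr: "\<And>i. i < Suc n \<Longrightarrow> r2 (Q!i) = r2 k + (i - (n - m))"
  proof -
    fix i assume i: "i < Suc n"
    show "r2 (Q!i) = r2 k + (i - (n - m))"
    proof (cases "i < n - m")
      case True then show ?thesis using Qnth by simp
    next
      case False then show ?thesis using Qnth Kr[of "i - (n - m)"] i mn by simp
    qed
  qed
  have Qn: "Q!n = l" using Qnth Km mn by (cases "n - m = 0") auto
  have Qstep: "\<And>i. Suc i < Suc n \<Longrightarrow> Q!i = Q!Suc i \<or> covers S2 le2 (Q!i) (Q!Suc i)"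
  proof -
    fix i assume i: "Suc i < Suc n"
    show "Q!i = Q!Suc i \<or> covers S2 le2 (Q!i) (Q!Suc i)"
    proof (cases "Suc i \<le> n - m")
      case True then show ?thesis using Qk by simp
    next
      case False
      then have "Suc i - (n - m) = Suc (i - (n - m))" by simp
      then show ?thesis using Qnth Kcov[of "i - (n - m)"] False i mn by simp
    qed
  qed
  define C where "C = map (\<lambda>(a, q). mk a q) (zip C1 Q)"
  have lC: "length C = Suc n" using C1f lQ by (simp add: C_def)
  have Cnth: "\<And>i. i < Suc n \<Longrightarrow> C!i = mk (C1!i) (Q!i)" using C1f lQ by (simp add: C_def)
  have Cp1: "\<And>i. i < Suc n \<Longrightarrow> pp1 (C!i) = C1!i" using Cnth by simp
  have Cp2: "\<And>i. i < Suc n \<Longrightarrow> p2 (C!i) = Q!i"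
  proof -
    fix i assume i: "i < Suc n"
    show "p2 (C!i) = Q!i"
    proof (cases "C1!i")
      case HBot
      then have "i = 0" using C1f(2)[OF i] by auto
      then have "a0 = HBot" using C10 HBot by simp
      then have "k = z2" using u_cases by auto
      then show ?thesis using Cnth[OF i] HBot Qk[of 0] \<open>i = 0\<close> by simp
    next
      case (Mid x) then show ?thesis using Cnth[OF i] by simp
    next
      case HTop then show ?thesis using C1f(2)[OF i] by simp
    qed
  qed
  have C0: "C!0 = u" using Cnth[of 0] C10 Qk[of 0] mk_pp[of u z2] by (simp add: a0_def k_def)
  have Cn: "C!n = v" using Cnth[of n] C1n Qn v by simp
  have CinH: "\<And>i. i < Suc n \<Longrightarrow> C!i \<in> H"
  proof -
    fix i assume i: "i < Suc n"
    show "C!i \<in> H"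
    proof (cases "i = 0")
      case True then show ?thesis using C0 uH by simp
    next
      case False
      then obtain x where x: "C1!i = Mid x" using C1f(2)[OF i] by (cases "C1!i") auto
      have xS: "x \<in> S1" using C1in[OF i] x by simp
      have rx: "Suc (r1 x) = rho r1 a0 + i" using C1f(2)[OF i] x by simp
      have "r2 (Q!i) \<le> r1 x"
      proof (cases "u = HBot")
        case True
        then have "a0 = HBot" "k = z2" using u_cases by auto
        then show ?thesis using rx Qr[OF i] slack[OF True] r2z2 False by simp
      next
        case False
        then obtain x0 where x0: "a0 = Mid x0" "(x0,k) \<in> R" using u_cases by blast
        then show ?thesis using rx Qr[OF i] by (simp add: R_mem) linarith
      qed
      then show ?thesis using Cnth[OF i] x xS Qin[OF i] by (simp add: R_mem)
    qed
  qed
  have Cc: "cpath H leH C"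
  proof (rule path_build)
    show "C \<noteq> []" using lC by auto
    show "\<And>i. i < length C \<Longrightarrow> C!i \<in> H" using CinH lC by simp
    show "\<And>i. Suc i < length C \<Longrightarrow> covers H1 leH1 (pp1 (C!i)) (pp1 (C!Suc i))"
      using C1c C1f Cp1 lC by (simp add: cpath_def)
    show "\<And>i. Suc i < length C \<Longrightarrow> C!Suc i = HTop \<or> p2 (C!i) = p2 (C!Suc i) \<or> covers S2 le2 (p2 (C!i)) (p2 (C!Suc i))"
      using Qstep Cp2 lC by simp
  qed
  have Cne: "C \<noteq> []" using lC by auto
  have Cpath: "cp H leH u v C"
    using Cc C0 Cn lC hd_conv_nth[OF Cne] last_conv_nth[OF Cne] by (simp add: cp_def)
  have Dfacts: "\<And>D. cp H leH u v D \<Longrightarrow> length D = Suc n \<and> cp H1 leH1 a0 (Mid y) (map pp1 D) \<and>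
      lazy S2 le2 (map p2 D) \<and> (map p2 D)!0 = k \<and> (map p2 D)!n = l \<and>
      (\<forall>i < Suc n. (map p2 D)!i \<in> S2) \<and>
      label_seq lab D = zip (label_seq lam1 (map pp1 D)) (label_seq (sec2 lam2) (map p2 D)) \<and>
      D = map (\<lambda>(a, q). mk a q) (zip (map pp1 D) (map p2 D))"
  proof -
    fix D assume D: "cp H leH u v D"
    have Dc: "cpath H leH D" and hD: "hd D = u" and lD: "last D = v" and Dne: "D \<noteq> []"
      using D cp_ends[OF D] by (auto simp: cp_def)
    have D0: "D!0 = u" and Dn: "D!(length D - 1) = v" using cp_ends[OF D] by auto
    have h1: "hd (map pp1 D) = a0" using hD Dne by (simp add: hd_map a0_def)
    have h2: "last (map pp1 D) = Mid y" using lD Dne v by (simp add: last_map)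
    have P1: "cp H1 leH1 a0 (Mid y) (map pp1 D)"
      unfolding cp_def by (intro conjI path_decomp(1)[OF Dc] h1 h2)
    have lD': "length D = Suc n" using X_facts[OF P1] by simp
    have nT: "\<And>i. i < length D \<Longrightarrow> D!i \<noteq> HTop"
    proof -
      fix i assume i: "i < length D"
      have "leH (D!i) (D!(length D - 1))" using cpath_le_nth[OF poset_H Dc, of i "length D - 1"] i by simp
      then show "D!i \<noteq> HTop" using Dn v by (auto simp: hat_le_HTop)
    qed
    have lz: "lazy S2 le2 (map p2 D)"
      unfolding lazy_def using path_decomp(2)[OF Dc] nT by simp
    have p0: "(map p2 D)!0 = k" using D0 Dne by (simp add: k_def)
    have pn: "(map p2 D)!n = l" using Dn lD' v by simp
    have pin: "\<forall>i < Suc n. (map p2 D)!i \<in> S2" using H_pp2 cpath_nth_in[OF Dc] lD' by simp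
    have L: "label_seq lab D = zip (label_seq lam1 (map pp1 D)) (label_seq (sec lam2 z2) D)"
      by (rule label_seq_rees) (use path_decomp(3)[OF Dc] in blast)
    have L2: "label_seq (sec lam2 z2) D = label_seq (sec2 lam2) (map p2 D)"
      by (rule sec_noTop) (use nT in blast)
    have rec: "D = map (\<lambda>(a, q). mk a q) (zip (map pp1 D) (map p2 D))"
      by (rule nth_equalityI) (simp_all add: mk_pp)
    show "?thesis D" using lD' P1 lz p0 pn pin L L2 rec by simp
  qed
  have F: "\<And>D. cp H leH u v D \<Longrightarrow> (\<forall>i < n - m. label_seq (sec2 lam2) (map p2 D) ! i = None) \<Longrightarrow>
      \<exists>K'. cp S2 le2 k l K' \<and> map p2 D = replicate (n - m) k @ K' \<and>
        label_seq (sec2 lam2) (map p2 D) = replicate (n - m) None @ map Some (label_seq lam2 K')"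
  proof -
    fix D assume D: "cp H leH u v D" and N: "\<forall>i < n - m. label_seq (sec2 lam2) (map p2 D) ! i = None"
    let ?ps = "map p2 D"
    have df: "length D = Suc n" "lazy S2 le2 ?ps" "?ps!0 = k" "?ps!n = l" "\<forall>i < Suc n. ?ps!i \<in> S2"
      using Dfacts[OF D] by blast+
    have lps: "length ?ps = Suc n" using df by simp
    have stay: "\<And>i. i < n - m \<Longrightarrow> ?ps!i = ?ps!Suc i"
    proof -
      fix i assume i: "i < n - m"
      have "label_seq (sec2 lam2) ?ps ! i = None" using N i by blast
      then show "?ps!i = ?ps!Suc i" using i lps by (simp add: label_seq_nth sec2_def split: if_splits)
    qed
    have pk: "\<And>i. i \<le> n - m \<Longrightarrow> ?ps!i = k"
    proof -
      fix i show "i \<le> n - m \<Longrightarrow> ?ps!i = k"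
      proof (induction i)
        case 0 then show ?case using df by simp
      next
        case (Suc i) then show ?case using stay[of i] by simp
      qed
    qed
    have nostay: "\<And>t. n - m \<le> t \<Longrightarrow> t < n \<Longrightarrow> ?ps!t \<noteq> ?ps!Suc t"
    proof
      fix t assume t: "n - m \<le> t" "t < n" "?ps!t = ?ps!Suc t"
      have "r2 (?ps!n) + 1 \<le> r2 (?ps!(n - m)) + (n - (n - m))"
        using B.lazy_rank[OF df(2), of "n - m" n] t lps by auto
      then show False using df(4) pk[of "n - m"] lm mn by simp
    qed
    define K' where "K' = drop (n - m) ?ps"
    have lK': "length K' = Suc m" using lps mn by (simp add: K'_def)
    have K'nth: "\<And>j. j < Suc m \<Longrightarrow> K'!j = ?ps!(n - m + j)" using lps mn by (simp add: K'_def)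
    have K'c: "cpath S2 le2 K'"
      unfolding cpath_def
    proof (intro conjI allI impI)
      show "K' \<noteq> []" using lK' by auto
      have "set ?ps \<subseteq> S2" using df(5) lps by (auto simp: in_set_conv_nth)
      then show "set K' \<subseteq> S2" unfolding K'_def by (meson set_drop_subset subset_trans)
      fix j assume j: "Suc j < length K'"
      have a: "n - m + j < n" using j lK' mn by simp
      have "?ps!(n - m + j) = ?ps!Suc (n - m + j) \<or> covers S2 le2 (?ps!(n - m + j)) (?ps!Suc (n - m + j))"
        using df(2) a lps unfolding lazy_def by simp
      moreover have "?ps!(n - m + j) \<noteq> ?ps!Suc (n - m + j)" using nostay[of "n - m + j"] a by simp
      ultimately have "covers S2 le2 (?ps!(n - m + j)) (?ps!Suc (n - m + j))" by blast
      then show "covers S2 le2 (K'!j) (K'!Suc j)" using K'nth j lK' by simp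
    qed
    have K'0: "K'!0 = k" using K'nth[of 0] pk[of "n - m"] by simp
    have K'm: "K'!m = l" using K'nth[of m] df(4) mn by simp
    have K'ne: "K' \<noteq> []" using lK' by auto
    have K'cp: "cp S2 le2 k l K'"
      using K'c K'0 K'm lK' hd_conv_nth[OF K'ne] last_conv_nth[OF K'ne] by (simp add: cp_def)
    have psq: "?ps = replicate (n - m) k @ K'"
    proof (rule nth_equalityI)
      show "length ?ps = length (replicate (n - m) k @ K')" using lps lK' mn by simp
      fix i assume i: "i < length ?ps"
      show "?ps!i = (replicate (n - m) k @ K')!i"
      proof (cases "i < n - m")
        case True then show ?thesis using pk[of i] by (simp add: nth_append)
      next
        case False then show ?thesis using K'nth[of "i - (n - m)"] i lps mn by (simp add: nth_append)
      qed
    qed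
    have K'd: "\<And>j. Suc j < length K' \<Longrightarrow> K'!j \<noteq> K'!Suc j"
      using K'c unfolding cpath_def covers_def strict_def by blast
    have "label_seq (sec2 lam2) ?ps = replicate (n - m) (sec2 lam2 k k) @ label_seq (sec2 lam2) K'"
      unfolding psq by (rule label_seq_rep) (use K'ne K'0 hd_conv_nth[OF K'ne] in auto)
    also have "\<dots> = replicate (n - m) None @ map Some (label_seq lam2 K')"
      using sec2_path[OF K'd] by (simp add: sec2_def)
    finally show "\<exists>K'. cp S2 le2 k l K' \<and> ?ps = replicate (n - m) k @ K' \<and>
        label_seq (sec2 lam2) ?ps = replicate (n - m) None @ map Some (label_seq lam2 K')"
      using K'cp psq by blast
  qed
  have pC1: "map pp1 C = C1" using Cp1 lC C1f by (intro nth_equalityI) auto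
  have pC2: "map p2 C = Q" using Cp2 lC lQ by (intro nth_equalityI) auto
  have Kd: "\<And>j. Suc j < length K \<Longrightarrow> K!j \<noteq> K!Suc j"
    using Kc unfolding cpath_def covers_def strict_def by blast
  have SC: "label_seq (sec2 lam2) Q = replicate (n - m) None @ map Some (label_seq lam2 K)"
  proof -
    have "label_seq (sec2 lam2) Q = replicate (n - m) (sec2 lam2 k k) @ label_seq (sec2 lam2) K"
      unfolding Q_def by (rule label_seq_rep) (use Kne K0 hd_conv_nth[OF Kne] in auto)
    also have "\<dots> = replicate (n - m) None @ map Some (label_seq lam2 K)"
      using sec2_path[OF Kd] by (simp add: sec2_def)
    finally show ?thesis .
  qed
  have LC0: "label_seq lab C = zip (label_seq lam1 (map pp1 C)) (label_seq (sec2 lam2) (map p2 C))"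
    using Dfacts[OF Cpath] by blast
  have LC: "label_seq lab C = zip (label_seq lam1 C1) (label_seq (sec2 lam2) Q)"
    using LC0 unfolding pC1 pC2 .
  have Cwi: "weakly_increasing lab C"
  proof -
    have "winc (label_seq lam1 C1)" using C1(2) wi_winc by blast
    moreover have "winc (label_seq (sec2 lam2) Q)"
      unfolding SC using K(2) by (intro winc_appendI) (simp add: winc_map_Some wi_winc)
    ultimately show ?thesis unfolding wi_winc LC using C1f lQ by (simp add: winc_zip)
  qed
  have uniq: "\<And>D. cp H leH u v D \<Longrightarrow> weakly_increasing lab D \<Longrightarrow> D = C"
  proof -
    fix D assume D: "cp H leH u v D" and wD: "weakly_increasing lab D"
    let ?ps = "map p2 D" and ?SD = "label_seq (sec2 lam2) (map p2 D)"
    have df: "length D = Suc n" "cp H1 leH1 a0 (Mid y) (map pp1 D)" "lazy S2 le2 ?ps" "?ps!0 = k" "?ps!n = l"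
      "label_seq lab D = zip (label_seq lam1 (map pp1 D)) ?SD"
      "D = map (\<lambda>(a, q). mk a q) (zip (map pp1 D) ?ps)"
      using Dfacts[OF D] by blast+
    have w: "winc (label_seq lam1 (map pp1 D))" "winc ?SD"
      using wD df(6) df(1) by (simp_all add: wi_winc winc_zip)
    have N: "\<forall>i < n - m. ?SD ! i = None"
    proof (intro allI impI, rule ccontr)
      fix i assume i: "i < n - m" and ne: "?SD!i \<noteq> None"
      have nos: "\<And>t. i \<le> t \<Longrightarrow> t < n \<Longrightarrow> ?ps!t \<noteq> ?ps!Suc t"
      proof
        fix t assume t: "i \<le> t" "t < n" "?ps!t = ?ps!Suc t"
        have "?SD!t = None" using t df(1) by (simp add: label_seq_nth sec2_def)
        moreover have "?SD!i \<le> ?SD!t" using winc_le[OF w(2), of i t] t df(1) by simp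
        ultimately show False using ne less_eq_option_None_is_None by (metis option.distinct(1))
      qed
      have "r2 (?ps!n) = r2 (?ps!i) + (n - i)" and "r2 (?ps!0) \<le> r2 (?ps!i)"
        using B.lazy_rank[OF df(3), of i n] B.lazy_rank[OF df(3), of 0 i] nos i df(1) by auto
      then show False using df(4) df(5) lm i by simp
    qed
    obtain K' where K': "cp S2 le2 k l K'" "?ps = replicate (n - m) k @ K'"
      "?SD = replicate (n - m) None @ map Some (label_seq lam2 K')"
      using F[OF D N] by blast
    have "winc (map Some (label_seq lam2 K'))" using w(2) K'(3) winc_suffix by metis
    then have "weakly_increasing lam2 K'" by (simp add: winc_map_Some wi_winc)
    then have "K' = K" using Ku K'(1) by blast
    then have "?ps = Q" using K'(2) by (simp add: Q_def)
    moreover have "map pp1 D = C1" using C1u[OF df(2)] w(1) wi_winc by blast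
    ultimately show "D = C" using df(7) by (simp add: C_def)
  qed
  have lexC: "\<And>D. cp H leH u v D \<Longrightarrow> D \<noteq> C \<Longrightarrow> lex_prec (label_seq lab C) (label_seq lab D)"
  proof -
    fix D assume D: "cp H leH u v D" and DC: "D \<noteq> C"
    let ?ps = "map p2 D" and ?SD = "label_seq (sec2 lam2) (map p2 D)" and ?SC = "label_seq (sec2 lam2) Q"
    have df: "length D = Suc n" "cp H1 leH1 a0 (Mid y) (map pp1 D)"
      "label_seq lab D = zip (label_seq lam1 (map pp1 D)) ?SD"
      "D = map (\<lambda>(a, q). mk a q) (zip (map pp1 D) ?ps)"
      using Dfacts[OF D] by blast+
    have lSC: "length ?SC = n" using lQ by simp
    have lSD: "length ?SD = n" using df(1) by simp
    have SCn: "\<And>i. i < n - m \<Longrightarrow> ?SC!i = None" unfolding SC by (simp add: nth_append)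
    have a: "peq (label_seq lam1 C1) (label_seq lam1 (map pp1 D)) \<or> lex_prec (label_seq lam1 C1) (label_seq lam1 (map pp1 D))"
      using C1l[OF df(2)] peq_refl by (cases "map pp1 D = C1") auto
    have b': "lex_prec ?SC ?SD \<or> (?ps = Q \<and> ?SD = ?SC)"
    proof (cases "\<exists>i. i < n - m \<and> ?SD!i \<noteq> None")
      case True
      define j where "j = (LEAST i. i < n - m \<and> ?SD!i \<noteq> None)"
      have j: "j < n - m" "?SD!j \<noteq> None" using LeastI_ex[OF True] unfolding j_def by blast+
      have jm: "\<And>i. i < j \<Longrightarrow> ?SD!i = None"
      proof -
        fix i assume i: "i < j"
        then have "\<not> (i < n - m \<and> ?SD!i \<noteq> None)" unfolding j_def by (rule not_less_Least)
        then show "?SD!i = None" using i j by simp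
      qed
      have "lex_prec ?SC ?SD"
      proof (rule lex_firstI)
        show "j < length ?SC" "j < length ?SD" using j lSC lSD by auto
        show "\<And>i. i < j \<Longrightarrow> ?SC!i = ?SD!i" using jm SCn j by simp
        show "?SC!j < ?SD!j" using SCn[of j] j by (cases "?SD!j") auto
      qed
      then show ?thesis by blast
    next
      case False
      then obtain K' where K': "cp S2 le2 k l K'" "?ps = replicate (n - m) k @ K'"
        "?SD = replicate (n - m) None @ map Some (label_seq lam2 K')"
        using F[OF D] by blast
      show ?thesis
      proof (cases "K' = K")
        case True
        then show ?thesis using K' SC by (simp add: Q_def)
      next
        case False
        then have "lex_prec (label_seq lam2 K) (label_seq lam2 K')" using Kl K'(1) by blast
        then have "lex_prec ?SC ?SD" unfolding SC K'(3) by (intro lex_append lex_map_Some)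
        then show ?thesis by blast
      qed
    qed
    have b: "peq ?SC ?SD \<or> lex_prec ?SC ?SD" using b' peq_refl by auto
    have s: "lex_prec (label_seq lam1 C1) (label_seq lam1 (map pp1 D)) \<or> lex_prec ?SC ?SD"
    proof (rule ccontr)
      assume n: "\<not> ?thesis"
      then have pD: "map pp1 D = C1" using C1l[OF df(2)] by blast
      have "?ps = Q" using b' n by blast
      then show False using pD df(4) DC by (simp add: C_def)
    qed
    show "lex_prec (label_seq lab C) (label_seq lab D)"
      unfolding LC df(3) by (rule lex_zip2[OF _ _ a b s]) (simp_all add: C1f lQ df(1))
  qed
  show ?thesis unfolding ELpair_def
  proof (intro conjI allI impI)
    show "\<exists>!xs. cp H leH u v xs \<and> weakly_increasing lab xs" using Cpath Cwi uniq by blast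
    fix xs ys assume h: "cp H leH u v xs \<and> weakly_increasing lab xs \<and> cp H leH u v ys \<and> ys \<noteq> xs"
    then have "xs = C" using uniq by blast
    then show "lex_prec (label_seq lab xs) (label_seq lab ys)" using lexC h by blast
  qed
qed

end


lemma (in rees) main: "EL_labeling H leH lab"
proof (rule EL_I[OF poset_H])
  fix u v assume "u \<in> H" "v \<in> H" "strict leH u v"
  then show "ELpair H leH lab u v" using top_case mid_case by (cases "v = HTop") auto
qed

theorem theorem2p3:
  fixes S1 :: "'a set" and le1 :: "'a \<Rightarrow> 'a \<Rightarrow> bool"
    and S2 :: "'b set" and le2 :: "'b \<Rightarrow> 'b \<Rightarrow> bool"
    and z2 :: 'b
    and lam1 :: "'a hat \<Rightarrow> 'a hat \<Rightarrow> 'l1::order"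
    and lam2 :: "'b \<Rightarrow> 'b \<Rightarrow> 'l2::order"
  assumes "finite_poset S1 le1" and "semipure S1 le1"
    and "finite_poset S2 le2" and "semipure S2 le2"
    and "poset_length S1 le1 = poset_length S2 le2"
    and "is_minimum S2 le2 z2"
    and "EL_labeling (hat_carrier S1) (hat_le le1) lam1"
    and "semi_EL_labeling S2 le2 z2 lam2"
  shows "EL_labeling (hat_carrier (rees_carrier S1 le1 S2 le2))
           (hat_le (rees_le S1 le1 S2 le2)) (rees_label lam1 lam2 z2)"
proof -
  interpret rees S1 le1 S2 le2 z2 lam1 lam2
    using assms(1,2,3,4,6,7,8) by unfold_locales
  show ?thesis using main .
qed

end
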